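(* Let $R$ be a commutative ring containing elements $x,y,z,w$, and let $f$ be an $R$-valued function on isomorphism classes of binary delta-matroids such that for every binary delta-matroid $D=(E;\Phi)$: $f(D)=x f(D\setminus e)+y f(D/e)$ for every $e\in E$ that is neither a loop nor a coloop; $f(D)=z f(D\setminus e)$ for every loop $e$; and $f(D)=w f(D/e)$ for every coloop $e$. Then for every binary delta-matroid $D=(E;\Phi)$ and distinct $a,b\in E$, $$f(D)-f(D'_{ab})=f(\widetilde D_{ab})-f\big((\widetilde D_{ab})'_{ab}\big).$$
   Context: Set system $(E;\Phi)$: finite $E$, nonempty $\Phi\subseteq2^E$, up to isomorphism. Twist $D*E'=(E;\{\phi\Delta E'\mid\phi\in\Phi\})$. A binary delta-matroid is a set system isomorphic to a twist of the nondegeneracy delta-matroid of a framed graph (simple graph with framing $V\to\{0,1\}$, $\mathbb{F}_2$-adjacency matrix with framing on the diagonal; feasible sets are the vertex subsets whose induced adjacency matrix is nondegenerate over $\mathbb{F}_2$, including $\emptyset$). For $D=(E;\Phi)$: $e$ is a coloop if it lies in every feasible set, a loop if in none; for non-coloop $e$, $D\setminus e=(E\setminus\{e\};\{\phi\in\Phi\mid e\notin\phi\})$; for non-loop $e$, $D/e=(E\setminus\{e\};\{\phi\setminus\{e\}\mid e\in\phi\in\Phi\})$; if $e$ is a coloop $D\setminus e:=D/e$, if $e$ is a loop $D/e:=D\setminus e$. (Minors of binary delta-matroids are binary.) Sliding: $\widetilde D_{ab}=(E;\Phi\,\Delta\,\{\phi\sqcup\{a\}\mid\phi\subseteq E\setminus\{a,b\},\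 \phi\sqcup\{b\}\in\Phi\})$; exchange: $D'_{ab}=\big(\widetilde{(D*\{b\})}_{ab}\big)*\{b\}$. *)

theory Defs
  imports "HOL-Library.Z2" "HOL-Combinatorics.Permutations"
begin

type_synonym 'a setsys = "'a set \<times> 'a set set"

definition symdiff :: "'b set \<Rightarrow> 'b set \<Rightarrow> 'b set" where
  "symdiff A B = (A - B) \<union> (B - A)"

definition set_system :: "'a setsys \<Rightarrow> bool" where
  "set_system D \<longleftrightarrow> finite (fst D) \<and> snd D \<noteq> {} \<and> (\<forall>\<phi>\<in>snd D. \<phi> \<subseteq> fst D)"

definition ss_iso :: "'a setsys \<Rightarrow> 'b setsys \<Rightarrow> bool" where
  "ss_iso D D' \<longleftrightarrow> (\<exists>g. bij_betw g (fst D) (fst D') \<and> snd D' = (\<lambda>\<phi>. g ` \<phi>) ` snd D)"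

definition twist :: "'a setsys \<Rightarrow> 'a set \<Rightarrow> 'a setsys" where
  "twist D E' = (fst D, (\<lambda>\<phi>. symdiff \<phi> E') ` snd D)"

text \<open>Framed graph on vertex set V: symmetric boolean relation A on V; off-diagonal entries are
  the adjacency of a simple graph, diagonal entries are the framing.\<close>

definition framed_graph :: "'a set \<Rightarrow> ('a \<Rightarrow> 'a \<Rightarrow> bool) \<Rightarrow> bool" where
  "framed_graph V A \<longleftrightarrow> finite V \<and> (\<forall>i\<in>V. \<forall>j\<in>V. A i j = A j i)"

definition det_F2 :: "('a \<Rightarrow> 'a \<Rightarrow> bool) \<Rightarrow> 'a set \<Rightarrow> bit" where
  "det_F2 A X = (\<Sum>p | p permutes X. of_int (sign p) * (\<Prod>i\<in>X. (if A i (p i) then 1 else 0)))"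

definition nondeg_dm :: "'a set \<Rightarrow> ('a \<Rightarrow> 'a \<Rightarrow> bool) \<Rightarrow> 'a setsys" where
  "nondeg_dm V A = (V, {X. X \<subseteq> V \<and> det_F2 A X \<noteq> 0})"

text \<open>Binary delta-matroid: isomorphic to a twist of the nondegeneracy delta-matroid of a framed
  graph. Since isomorphisms may relabel vertices, we transport the framed graph to the ground set.\<close>

definition binary_dm :: "'a setsys \<Rightarrow> bool" where
  "binary_dm D \<longleftrightarrow> (\<exists>A T. framed_graph (fst D) A \<and> T \<subseteq> fst D \<and>
      ss_iso (twist (nondeg_dm (fst D) A) T) D)"

definition coloop :: "'a setsys \<Rightarrow> 'a \<Rightarrow> bool" where
  "coloop D e \<longleftrightarrow> (\<forall>\<phi>\<in>snd D. e \<in> \<phi>)"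

definition loop :: "'a setsys \<Rightarrow> 'a \<Rightarrow> bool" where
  "loop D e \<longleftrightarrow> (\<forall>\<phi>\<in>snd D. e \<notin> \<phi>)"

definition contr :: "'a setsys \<Rightarrow> 'a \<Rightarrow> 'a setsys" where
  "contr D e = (if loop D e then (fst D - {e}, {\<phi> \<in> snd D. e \<notin> \<phi>})
                else (fst D - {e}, {\<phi> - {e} | \<phi>. \<phi> \<in> snd D \<and> e \<in> \<phi>}))"

definition del :: "'a setsys \<Rightarrow> 'a \<Rightarrow> 'a setsys" where
  "del D e = (if coloop D e then contr D e else (fst D - {e}, {\<phi> \<in> snd D. e \<notin> \<phi>}))"

definition slide :: "'a setsys \<Rightarrow> 'a \<Rightarrow> 'a \<Rightarrow> 'a setsys" where
  "slide D a b = (fst D, symdiff (snd D)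
      {\<phi> \<union> {a} | \<phi>. \<phi> \<subseteq> fst D - {a, b} \<and> \<phi> \<union> {b} \<in> snd D})"

definition exch :: "'a setsys \<Rightarrow> 'a \<Rightarrow> 'a \<Rightarrow> 'a setsys" where
  "exch D a b = twist (slide (twist D {b}) a b) {b}"

end

theory Submission
  imports Defs "Jordan_Normal_Form.Determinant"
begin


lemma eq_self_T: "(x = x) = True" by simp
lemma bit_cases: "(x::bit) = 0 \<or> x = 1" by (cases x) simp_all

lemma bit_add_self[simp]: "(x::bit) + x = 0" by (cases x) simp_all

definition detb :: "('a \<Rightarrow> 'a \<Rightarrow> bit) \<Rightarrow> 'a set \<Rightarrow> bit" where
  "detb M X = (\<Sum>p | p permutes X. \<Prod>i\<in>X. M i (p i))"

definition bm :: "('a \<Rightarrow> 'a \<Rightarrow> bool) \<Rightarrow> 'a \<Rightarrow> 'a \<Rightarrow> bit" where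
  "bm A i j = (if A i j then 1 else 0)"

lemma of_bool_add_bit: "(of_bool P :: bit) + of_bool Q = of_bool (P \<noteq> Q)" by auto
lemma of_bool_eq_bit: "((of_bool P :: bit) = of_bool Q) = (P = Q)" by auto
lemma if_of_bool_bit: "(if c then (of_bool P :: bit) else 0) = of_bool (c \<and> P)" by auto
lemma bm_of_bool: "bm A i j = of_bool (A i j)" by (simp add: bm_def)

lemma of_int_sign_bit[simp]: "(of_int (sign p) :: bit) = 1"
  by (cases rule: sign_cases[of p]) simp_all

lemma det_F2_detb: "det_F2 A X = detb (bm A) X"
  unfolding det_F2_def detb_def bm_def by (rule sum.cong[OF refl]) (simp only: of_int_sign_bit mult_1)

lemma detb_cong:
  assumes "\<And>i j. i \<in> X \<Longrightarrow> j \<in> X \<Longrightarrow> M i j = M' i j"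
  shows "detb M X = detb M' X"
  unfolding detb_def
proof (rule sum.cong[OF refl], rule prod.cong[OF refl])
  fix p i assume "p \<in> {p. p permutes X}" "i \<in> X"
  then show "M i (p i) = M' i (p i)" using assms permutes_in_image by fastforce
qed

lemma detb_relabel:
  fixes h :: "'b \<Rightarrow> 'a"
  assumes inj: "inj_on h Y"
  shows "detb (\<lambda>i j. M (h i) (h j)) Y = detb M (h ` Y)"
  unfolding detb_def
proof (rule sum.reindex_bij_witness[where j = "\<lambda>p a. if a \<in> h ` Y then h (p (inv_into Y h a)) else a"
      and i = "\<lambda>q y. if y \<in> Y then inv_into Y h (q (h y)) else y"])
  fix p assume p: "p \<in> {p. p permutes Y}"
  then have pY: "\<And>y. y \<in> Y \<Longrightarrow> p y \<in> Y" and pn: "\<And>y. y \<notin> Y \<Longrightarrow> p y = y"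
    by (auto simp: permutes_in_image permutes_not_in)
  show "(\<lambda>y. if y \<in> Y then inv_into Y h ((if h y \<in> h ` Y then h (p (inv_into Y h (h y))) else h y)) else y) = p"
    using pY pn inj by (auto simp: fun_eq_iff inv_into_f_f)
  have b: "bij_betw (h \<circ> p \<circ> inv_into Y h) (h ` Y) (h ` Y)"
    by (rule bij_betw_trans[OF bij_betw_inv_into[OF inj_on_imp_bij_betw[OF inj]]])
       (rule bij_betw_trans[OF permutes_imp_bij[OF p[simplified]] inj_on_imp_bij_betw[OF inj]])
  have "bij_betw (\<lambda>a. if a \<in> h ` Y then h (p (inv_into Y h a)) else a) (h ` Y) (h ` Y)"
    using b by (rule bij_betw_cong[THEN iffD1, rotated]) auto
  then show "(\<lambda>a. if a \<in> h ` Y then h (p (inv_into Y h a)) else a) \<in> {p. p permutes h ` Y}"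
    by (auto intro!: bij_imp_permutes)
  show "(\<Prod>x\<in>h ` Y. M x ((if x \<in> h ` Y then h (p (inv_into Y h x)) else x))) = (\<Prod>i\<in>Y. M (h i) (h (p i)))"
    using inj by (simp add: prod.reindex inv_into_f_f)
next
  fix q assume q: "q \<in> {p. p permutes h ` Y}"
  then have qY: "\<And>y. y \<in> h ` Y \<Longrightarrow> q y \<in> h ` Y" and qn: "\<And>y. y \<notin> h ` Y \<Longrightarrow> q y = y"
    by (auto simp: permutes_in_image permutes_not_in)
  show "(\<lambda>a. if a \<in> h ` Y then h ((if inv_into Y h a \<in> Y then inv_into Y h (q (h (inv_into Y h a))) else inv_into Y h a)) else a) = q"
  proof
    fix a show "(if a \<in> h ` Y then h ((if inv_into Y h a \<in> Y then inv_into Y h (q (h (inv_into Y h a))) else inv_into Y h a)) else a) = q a"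
      using qY[of a] qn[of a] inj by (auto simp: inv_into_into f_inv_into_f)
  qed
  have b: "bij_betw (inv_into Y h \<circ> q \<circ> h) Y Y"
    by (rule bij_betw_trans[OF inj_on_imp_bij_betw[OF inj]])
       (rule bij_betw_trans[OF permutes_imp_bij[OF q[simplified]] bij_betw_inv_into[OF inj_on_imp_bij_betw[OF inj]]])
  have "bij_betw (\<lambda>y. if y \<in> Y then inv_into Y h (q (h y)) else y) Y Y"
    using b by (rule bij_betw_cong[THEN iffD1, rotated]) auto
  then show "(\<lambda>y. if y \<in> Y then inv_into Y h (q (h y)) else y) \<in> {p. p permutes Y}"
    by (auto intro!: bij_imp_permutes)
qed


lemma detb_row_add:
  assumes X: "finite X" "r \<in> X"
    and r: "\<And>j. M r j = M1 r j + M2 r j"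
    and o1: "\<And>i j. i \<noteq> r \<Longrightarrow> M1 i j = M i j" and o2: "\<And>i j. i \<noteq> r \<Longrightarrow> M2 i j = M i j"
  shows "detb M X = detb M1 X + detb M2 X"
  unfolding detb_def sum.distrib[symmetric]
proof (rule sum.cong[OF refl])
  fix p :: "'a \<Rightarrow> 'a"
  have e: "\<And>N. (\<Prod>i\<in>X. N i (p i)) = N r (p r) * (\<Prod>i\<in>X-{r}. N i (p i))"
    using X by (simp add: prod.remove)
  have c1: "(\<Prod>i\<in>X-{r}. M1 i (p i)) = (\<Prod>i\<in>X-{r}. M i (p i))"
    by (rule prod.cong) (auto simp: o1)
  have c2: "(\<Prod>i\<in>X-{r}. M2 i (p i)) = (\<Prod>i\<in>X-{r}. M i (p i))"
    by (rule prod.cong) (auto simp: o2)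
  show "(\<Prod>i\<in>X. M i (p i)) = (\<Prod>i\<in>X. M1 i (p i)) + (\<Prod>i\<in>X. M2 i (p i))"
    unfolding e[of M] e[of M1] e[of M2] c1 c2 r by (rule distrib_right)
qed

lemma detb_transpose:
  assumes "finite X"
  shows "detb (\<lambda>i j. M j i) X = detb M X"
  unfolding detb_def
proof (rule sum.reindex_bij_witness[where i = Hilbert_Choice.inv and j = Hilbert_Choice.inv])
  fix p assume p: "p \<in> {p. p permutes X}"
  then show "Hilbert_Choice.inv (Hilbert_Choice.inv p) = p" by (simp add: permutes_inv_inv)
  show "Hilbert_Choice.inv p \<in> {p. p permutes X}" using p by (simp add: permutes_inv)
  have "(\<Prod>x\<in>X. (\<lambda>y. M y (Hilbert_Choice.inv p y)) (p x)) = (\<Prod>y\<in>X. M y (Hilbert_Choice.inv p y))"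
    by (rule prod.reindex_bij_betw) (use p in \<open>simp add: permutes_imp_bij\<close>)
  then show "(\<Prod>i\<in>X. M i (Hilbert_Choice.inv p i)) = (\<Prod>i\<in>X. M (p i) i)"
    using p by (simp add: permutes_inverses)
qed (simp_all add: permutes_inv_inv permutes_inv)

lemma detb_eq_rows:
  assumes X: "finite X" "r \<in> X" "s \<in> X" "r \<noteq> s" and rs: "\<And>j. M r j = M s j"
  shows "detb M X = 0"
proof -
  let ?g = "\<lambda>p. \<Prod>i\<in>X. M i (p i)"
  let ?t = "transpose r s"
  let ?P = "{p. p permutes X}"
  let ?E = "{p. p permutes X \<and> evenperm p}"
  let ?O = "{p. p permutes X \<and> \<not> evenperm p}"
  have fin: "finite ?P" using X by (simp add: finite_permutations)
  have split: "?P = ?E \<union> ?O" by auto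
  have "sum ?g ?P = sum ?g ?E + sum ?g ?O"
    unfolding split by (rule sum.union_disjoint) (use fin in auto)
  moreover have "sum ?g ?O = sum ?g ?E"
  proof (rule sum.reindex_bij_witness[where i = "\<lambda>p. p \<circ> ?t" and j = "\<lambda>p. p \<circ> ?t"])
    fix p assume p: "p \<in> ?O"
    show "p \<circ> ?t \<circ> ?t = p" by (simp add: comp_assoc)
    have tp: "?t permutes X" using X by (simp add: permutes_swap_id)
    have pp: "permutation p" using p X permutation_permutes by blast
    have ev: "evenperm (p \<circ> ?t) = (evenperm p = evenperm ?t)"
      by (rule evenperm_comp[OF pp permutation_swap_id])
    show "p \<circ> ?t \<in> ?E" using p ev X by (auto simp: evenperm_swap intro: permutes_compose[OF tp])
    have "(\<Prod>i\<in>X. M (?t i) (p i)) = (\<Prod>i\<in>X. M i (p i))"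
      by (rule prod.cong[OF refl]) (auto simp: rs transpose_def)
    moreover have "(\<Prod>i\<in>X. M (?t i) (p (?t (?t i)))) = (\<Prod>i\<in>X. M i (p (?t i)))"
      by (rule prod.reindex_bij_betw[of ?t X X "\<lambda>i. M i (p (?t i))"]) (rule permutes_imp_bij[OF tp])
    ultimately show "?g (p \<circ> ?t) = ?g p" by simp
  next
    fix p assume p: "p \<in> ?E"
    show "p \<circ> ?t \<circ> ?t = p" by (simp add: comp_assoc)
    have tp: "?t permutes X" using X by (simp add: permutes_swap_id)
    have pp: "permutation p" using p X permutation_permutes by blast
    have ev: "evenperm (p \<circ> ?t) = (evenperm p = evenperm ?t)"
      by (rule evenperm_comp[OF pp permutation_swap_id])
    show "p \<circ> ?t \<in> ?O" using p ev X by (auto simp: evenperm_swap intro: permutes_compose[OF tp])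
  qed
  ultimately show ?thesis unfolding detb_def by simp
qed




lemma detb_col_add:
  assumes X: "finite X" "c \<in> X"
    and r: "\<And>i. M i c = M1 i c + M2 i c"
    and o1: "\<And>i j. j \<noteq> c \<Longrightarrow> M1 i j = M i j" and o2: "\<And>i j. j \<noteq> c \<Longrightarrow> M2 i j = M i j"
  shows "detb M X = detb M1 X + detb M2 X"
proof -
  have "detb (\<lambda>i j. M j i) X = detb (\<lambda>i j. M1 j i) X + detb (\<lambda>i j. M2 j i) X"
    by (rule detb_row_add[OF X]) (simp_all add: r o1 o2)
  then show ?thesis by (simp only: detb_transpose[OF X(1), of M] detb_transpose[OF X(1), of M1] detb_transpose[OF X(1), of M2])
qed

definition congr :: "('a \<Rightarrow> 'a \<Rightarrow> bool) \<Rightarrow> 'a \<Rightarrow> 'a \<Rightarrow> 'a \<Rightarrow> 'a \<Rightarrow> bool" where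
  "congr A a b i j = (if i = a \<and> j = a then A a a \<noteq> A b b else if i = a then A a j \<noteq> A b j
     else if j = a then A i a \<noteq> A i b else A i j)"

definition flip :: "('a \<Rightarrow> 'a \<Rightarrow> bool) \<Rightarrow> 'a \<Rightarrow> 'a \<Rightarrow> 'a \<Rightarrow> 'a \<Rightarrow> bool" where
  "flip A a b i j = (if (i = a \<and> j = b) \<or> (i = b \<and> j = a) then \<not> A i j else A i j)"

lemma detb_congr_expand:
  assumes X: "finite X" "a \<in> X" and ab: "a \<noteq> b" and sab: "A a b = A b a"
  defines "B \<equiv> bm A"
  shows "detb (bm (congr A a b)) X = detb B X + detb (\<lambda>i j. if j = a then B i b else B i j) X
     + detb (\<lambda>i j. if i = a then B b j else B i j) X
     + detb (\<lambda>i j. B (if i = a then b else i) (if j = a then b else j)) X"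
proof -
  define K where "K i j = B i j + (if j = a then B i b else 0)" for i j
  have eq: "bm (congr A a b) = (\<lambda>i j. K i j + (if i = a then K b j else 0))"
  proof (intro ext)
    fix i j
    show "bm (congr A a b) i j = K i j + (if i = a then K b j else 0)"
      unfolding K_def B_def bm_of_bool if_of_bool_bit of_bool_add_bit of_bool_eq_bit congr_def
      using ab sab by (cases "i = a"; cases "j = a"; cases "A a a"; cases "A b b"; cases "A b a"; simp)
  qed
  have 1: "detb (\<lambda>i j. K i j + (if i = a then K b j else 0)) X = detb K X + detb (\<lambda>i j. if i = a then K b j else K i j) X"
    by (rule detb_row_add[OF X]) simp_all
  have 2: "detb K X = detb B X + detb (\<lambda>i j. if j = a then B i b else B i j) X"
    by (rule detb_col_add[OF X]) (simp_all add: K_def)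
  have 3: "detb (\<lambda>i j. if i = a then K b j else K i j) X =
      detb (\<lambda>i j. if i = a then B b j else B i j) X + detb (\<lambda>i j. B (if i = a then b else i) (if j = a then b else j)) X"
    by (rule detb_col_add[OF X]) (simp_all add: K_def)
  show ?thesis unfolding eq 1 2 3 by (simp only: add.assoc)
qed

lemma bit_cancel: "(x::bit) + y + y + z = x + z"
proof -
  have "x + y + y + z = x + (y + y) + z" by (simp only: add.assoc)
  also have "\<dots> = x + z" by (simp only: bit_add_self add_0_right)
  finally show ?thesis .
qed

lemma detb_C_R:
  assumes X: "finite X" "X \<subseteq> V" "b \<in> V" and sym: "\<And>i j. i \<in> V \<Longrightarrow> j \<in> V \<Longrightarrow> B i j = B j i"
  shows "detb (\<lambda>i j. if j = a then B i b else B i j) X = detb (\<lambda>i j. if i = a then B b j else B i j) X"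
proof -
  have "detb (\<lambda>i j. if j = a then B i b else B i j) X = detb (\<lambda>i j. if i = a then B j b else B j i) X"
    using detb_transpose[OF X(1), of "\<lambda>i j. if j = a then B i b else B i j"] by simp
  also have "\<dots> = detb (\<lambda>i j. if i = a then B b j else B i j) X"
    by (rule detb_cong) (use X sym in auto)
  finally show ?thesis .
qed

lemma det_congr:
  assumes V: "finite V" "X \<subseteq> V" "a \<in> V" "b \<in> V" "a \<noteq> b"
    and sym: "\<And>i j. i \<in> V \<Longrightarrow> j \<in> V \<Longrightarrow> A i j = A j i"
  shows "detb (bm (congr A a b)) X = detb (bm A) X +
     (if a \<in> X \<and> b \<notin> X then detb (bm A) (insert b (X - {a})) else 0)"
proof -
  define B where "B = bm A"
  have symB: "\<And>i j. i \<in> V \<Longrightarrow> j \<in> V \<Longrightarrow> B i j = B j i" using sym by (simp add: B_def bm_def)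
  have fX: "finite X" using V finite_subset by blast
  show ?thesis
  proof (cases "a \<in> X")
    case False
    have "detb (bm (congr A a b)) X = detb (bm A) X"
      by (rule detb_cong) (use False in \<open>auto simp: bm_def congr_def\<close>)
    then show ?thesis using False by simp
  next
    case aX: True
    have ex: "detb (bm (congr A a b)) X = detb B X + detb (\<lambda>i j. if j = a then B i b else B i j) X
     + detb (\<lambda>i j. if i = a then B b j else B i j) X
     + detb (\<lambda>i j. B (if i = a then b else i) (if j = a then b else j)) X"
      unfolding B_def by (rule detb_congr_expand[OF fX aX V(5)]) (use sym V in auto)
    have CR: "detb (\<lambda>i j. if j = a then B i b else B i j) X = detb (\<lambda>i j. if i = a then B b j else B i j) X"
      by (rule detb_C_R[OF fX V(2) V(4) symB])
    show ?thesis
    proof (cases "b \<in> X")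
      case bX: True
      have R0: "detb (\<lambda>i j. if i = a then B b j else B i j) X = 0"
        by (rule detb_eq_rows[OF fX aX bX V(5)]) (use V(5) in simp)
      have Q0: "detb (\<lambda>i j. B (if i = a then b else i) (if j = a then b else j)) X = 0"
        by (rule detb_eq_rows[OF fX aX bX V(5)]) (use V(5) in simp)
      have "detb (bm (congr A a b)) X = detb B X" unfolding ex CR R0 Q0 by (simp only: add_0_right)
      then show ?thesis using bX by (simp add: B_def)
    next
      case bX: False
      have inj: "inj_on (\<lambda>i. if i = a then b else i) X" using bX by (auto simp: inj_on_def)
      have img: "(\<lambda>i. if i = a then b else i) ` X = insert b (X - {a})" using aX by auto
      have Q: "detb (\<lambda>i j. B (if i = a then b else i) (if j = a then b else j)) X = detb B (insert b (X - {a}))"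
        using detb_relabel[OF inj, of B] img by simp
      have "detb (bm (congr A a b)) X = detb B X + detb B (insert b (X - {a}))"
        unfolding ex CR Q by (rule bit_cancel)
      then show ?thesis using aX bX by (simp add: B_def)
    qed
  qed
qed


lemma of_bool_mult2: "(of_bool P :: bit) * (of_bool Q * x) = (if P \<and> Q then x else 0)" by (cases P; cases Q) simp_all
lemma if_add_F: "\<not> c \<Longrightarrow> x = y \<Longrightarrow> x = y + (if c then z else (0::bit))" by simp
lemma if_add_T: "c \<Longrightarrow> x = y + z \<Longrightarrow> x = y + (if c then z else (0::bit))" by simp

lemma detb_R1_R2:
  assumes X: "finite X" "a \<in> X" "b \<in> X" "a \<noteq> b"
    and sym: "\<And>i j. i \<in> X \<Longrightarrow> j \<in> X \<Longrightarrow> B i j = B j i"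
  shows "detb (\<lambda>i j. if i = a then of_bool (j = b) else B i j) X =
         detb (\<lambda>i j. if i = b then of_bool (j = a) else B i j) X"
proof -
  have "detb (\<lambda>i j. if i = a then of_bool (j = b) else B i j) X =
        detb (\<lambda>i j. if j = a then of_bool (i = b) else B j i) X"
    using detb_transpose[OF X(1), of "\<lambda>i j. if i = a then of_bool (j = b) else B i j"] by simp
  also have "\<dots> = detb (\<lambda>i j. if i = b then of_bool (j = a) else B i j) X"
    unfolding detb_def
  proof (rule sum.cong[OF refl])
    fix p assume "p \<in> {p. p permutes X}"
    then have p: "p permutes X" by simp
    have pin: "\<And>i. i \<in> X \<Longrightarrow> p i \<in> X" using p by (simp add: permutes_in_image)
    have pinj: "\<And>i j. p i = p j \<Longrightarrow> i = j" using p by (metis permutes_inverses(2))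
    show "(\<Prod>i\<in>X. if p i = a then of_bool (i = b) else B (p i) i) =
          (\<Prod>i\<in>X. if i = b then of_bool (p i = a) else B i (p i))"
    proof (cases "p b = a")
      case True
      have "(\<Prod>i\<in>X. if p i = a then of_bool (i = b) else B (p i) i) =
            (if p b = a then of_bool (b = b) else B (p b) b) * (\<Prod>i\<in>X-{b}. if p i = a then of_bool (i = b) else B (p i) i)"
        by (rule prod.remove[OF X(1) X(3)])
      also have "(\<Prod>i\<in>X-{b}. if p i = a then of_bool (i = b) else B (p i) i) = (\<Prod>i\<in>X-{b}. B i (p i))"
      proof (rule prod.cong[OF refl])
        fix i assume i: "i \<in> X - {b}"
        then have "p i \<noteq> a" using True pinj by blast
        then show "(if p i = a then of_bool (i = b) else B (p i) i) = B i (p i)"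
          using sym[of "p i" i] pin[of i] i by simp
      qed
      finally have l: "(\<Prod>i\<in>X. if p i = a then of_bool (i = b) else B (p i) i) = (\<Prod>i\<in>X-{b}. B i (p i))"
        by (simp only: True eq_self_T if_True of_bool_eq(2) mult_1_left)
      have "(\<Prod>i\<in>X. if i = b then of_bool (p i = a) else B i (p i)) =
            (if b = b then of_bool (p b = a) else B b (p b)) * (\<Prod>i\<in>X-{b}. if i = b then of_bool (p i = a) else B i (p i))"
        by (rule prod.remove[OF X(1) X(3)])
      also have "(\<Prod>i\<in>X-{b}. if i = b then of_bool (p i = a) else B i (p i)) = (\<Prod>i\<in>X-{b}. B i (p i))"
        by (rule prod.cong[OF refl]) auto
      finally show ?thesis unfolding l
        by (simp only: True eq_self_T if_True of_bool_eq(2) mult_1_left)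
    next
      case False
      have r: "(\<Prod>i\<in>X. if i = b then of_bool (p i = a) else B i (p i)) = 0"
        using X False by (intro prod_zero) auto
      have ia: "Hilbert_Choice.inv p a \<in> X" "p (Hilbert_Choice.inv p a) = a" using p X by (auto simp: permutes_inverses permutes_inv permutes_in_image)
      have "Hilbert_Choice.inv p a \<noteq> b" using ia False by auto
      then have l: "(\<Prod>i\<in>X. if p i = a then of_bool (i = b) else B (p i) i) = 0"
        using X ia by (intro prod_zero) (auto intro!: bexI[of _ "Hilbert_Choice.inv p a"])
      show ?thesis using l r by simp
    qed
  qed
  finally show ?thesis .
qed

lemma detb_W:
  assumes X: "finite X" "a \<in> X" "b \<in> X" "a \<noteq> b"
  shows "detb (\<lambda>i j. if i = a then of_bool (j = b) else if i = b then of_bool (j = a) else B i j) X =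
         detb B (X - {a, b})"
proof -
  let ?W = "\<lambda>i j. if i = a then of_bool (j = b) else if i = b then of_bool (j = a) else B i j"
  let ?Y = "X - {a, b}"
  let ?g = "\<lambda>p. \<Prod>i\<in>?Y. B i (p i)"
  let ?t = "transpose a b"
  have fin: "finite {p. p permutes X}" using X by (simp add: finite_permutations)
  have e: "\<And>p. (\<Prod>i\<in>X. ?W i (p i)) = (if p a = b \<and> p b = a then ?g p else 0)"
  proof -
    fix p :: "'a \<Rightarrow> 'a"
    have "(\<Prod>i\<in>X. ?W i (p i)) = ?W a (p a) * (\<Prod>i\<in>X - {a}. ?W i (p i))"
      by (rule prod.remove[OF X(1) X(2)])
    also have "(\<Prod>i\<in>X - {a}. ?W i (p i)) = ?W b (p b) * (\<Prod>i\<in>X - {a} - {b}. ?W i (p i))"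
      by (rule prod.remove) (use X in auto)
    also have "(\<Prod>i\<in>X - {a} - {b}. ?W i (p i)) = ?g p"
      by (rule prod.cong) auto
    finally have "(\<Prod>i\<in>X. ?W i (p i)) = of_bool (p a = b) * (of_bool (p b = a) * ?g p)"
      using X(4) by (simp only: if_True if_False eq_self_T not_sym[OF X(4)])
    then show "(\<Prod>i\<in>X. ?W i (p i)) = (if p a = b \<and> p b = a then ?g p else 0)"
      by (simp only: of_bool_mult2)
  qed
  have "detb ?W X = (\<Sum>p | p permutes X. if p a = b \<and> p b = a then ?g p else 0)"
    unfolding detb_def e ..
  also have "\<dots> = sum ?g {p \<in> {p. p permutes X}. p a = b \<and> p b = a}"
    by (rule sum.inter_filter[OF fin, symmetric])
  also have "\<dots> = sum ?g {q. q permutes ?Y}"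
  proof (rule sum.reindex_bij_witness[where i = "\<lambda>q. ?t \<circ> q" and j = "\<lambda>p. ?t \<circ> p"])
    fix q assume q: "q \<in> {q. q permutes ?Y}"
    then have q': "q permutes ?Y" by simp
    show "?t \<circ> (?t \<circ> q) = q" by (simp add: comp_assoc[symmetric])
    have qX: "q permutes X" by (rule permutes_subset[OF q']) auto
    have qa: "q a = a" "q b = b" using q' by (auto intro: permutes_not_in)
    show "?t \<circ> q \<in> {p \<in> {p. p permutes X}. p a = b \<and> p b = a}"
      using qa X by (auto intro!: permutes_compose[OF qX] permutes_swap_id)
  next
    fix p assume p: "p \<in> {p \<in> {p. p permutes X}. p a = b \<and> p b = a}"
    show "?t \<circ> (?t \<circ> p) = p" by (simp add: comp_assoc[symmetric])
    have pp: "p permutes X" "p a = b" "p b = a" using p by auto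
    have pin: "\<And>i. i \<in> ?Y \<Longrightarrow> p i \<in> ?Y"
    proof -
      fix i assume i: "i \<in> ?Y"
      have "p i \<in> X" using i pp(1) permutes_in_image by fastforce
      moreover have "p i \<noteq> b" "p i \<noteq> a" using i pp by (metis DiffD2 insertCI permutes_inverses(2))+
      ultimately show "p i \<in> ?Y" by simp
    qed
    show "?g (?t \<circ> p) = ?g p"
      by (rule prod.cong[OF refl]) (use pin in \<open>auto simp: transpose_def\<close>)
    have tp: "?t \<circ> p permutes X" using p X by (auto intro!: permutes_compose permutes_swap_id)
    show "?t \<circ> p \<in> {q. q permutes ?Y}"
      using p by (auto intro!: permutes_superset[OF tp])
  qed
  finally show ?thesis unfolding detb_def .
qed

lemma det_flip:
  assumes V: "finite V" "X \<subseteq> V" "a \<in> V" "b \<in> V" "a \<noteq> b"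
    and sym: "\<And>i j. i \<in> V \<Longrightarrow> j \<in> V \<Longrightarrow> A i j = A j i"
  shows "detb (bm (flip A a b)) X = detb (bm A) X +
     (if a \<in> X \<and> b \<in> X then detb (bm A) (X - {a, b}) else 0)"
proof -
  define B where "B = bm A"
  have symB: "\<And>i j. i \<in> X \<Longrightarrow> j \<in> X \<Longrightarrow> B i j = B j i" using sym V by (auto simp: B_def bm_def)
  have fX: "finite X" using V finite_subset by blast
  show ?thesis
  proof (cases "a \<in> X \<and> b \<in> X")
    case False
    have "detb (bm (flip A a b)) X = detb (bm A) X"
      by (rule detb_cong) (use False in \<open>auto simp: bm_def flip_def\<close>)
    then show ?thesis using False by (rule if_add_F[rotated])
  next
    case True
    then have aX: "a \<in> X" and bX: "b \<in> X" by auto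
    define G where "G i j = B i j + of_bool (i = b \<and> j = a)" for i j
    have eq: "bm (flip A a b) = (\<lambda>i j. G i j + of_bool (i = a \<and> j = b))"
    proof (intro ext)
      fix i j
      show "bm (flip A a b) i j = G i j + of_bool (i = a \<and> j = b)"
        unfolding G_def B_def bm_of_bool of_bool_add_bit of_bool_eq_bit flip_def
        using V(5) by (cases "i = a"; cases "j = a"; cases "i = b"; cases "j = b"; simp)
    qed
    have 1: "detb (\<lambda>i j. G i j + of_bool (i = a \<and> j = b)) X = detb G X + detb (\<lambda>i j. if i = a then of_bool (j = b) else G i j) X"
      by (rule detb_row_add[OF fX aX]) simp_all
    have 2: "detb G X = detb B X + detb (\<lambda>i j. if i = b then of_bool (j = a) else B i j) X"
      by (rule detb_row_add[OF fX bX]) (simp_all add: G_def)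
    have 3: "detb (\<lambda>i j. if i = a then of_bool (j = b) else G i j) X =
        detb (\<lambda>i j. if i = a then of_bool (j = b) else B i j) X +
        detb (\<lambda>i j. if i = a then of_bool (j = b) else if i = b then of_bool (j = a) else B i j) X"
      by (rule detb_row_add[OF fX bX]) (use V(5) in \<open>simp_all add: G_def\<close>)
    have "detb (bm (flip A a b)) X = detb B X + detb (\<lambda>i j. if i = b then of_bool (j = a) else B i j) X +
        detb (\<lambda>i j. if i = a then of_bool (j = b) else B i j) X +
        detb (\<lambda>i j. if i = a then of_bool (j = b) else if i = b then of_bool (j = a) else B i j) X"
      unfolding eq 1 2 3 by (simp only: add.assoc)
    also have "\<dots> = detb B X + detb (\<lambda>i j. if i = b then of_bool (j = a) else B i j) X +
        detb (\<lambda>i j. if i = b then of_bool (j = a) else B i j) X + detb B (X - {a, b})"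
      by (simp only: detb_R1_R2[OF fX aX bX V(5) symB] detb_W[OF fX aX bX V(5)])
    finally have "detb (bm (flip A a b)) X = detb B X + detb B (X - {a, b})"
      by (simp only: bit_cancel)
    then show ?thesis using True unfolding B_def by (rule if_add_T[rotated])
  qed
qed


definition ndeg :: "('a \<Rightarrow> 'a \<Rightarrow> bit) \<Rightarrow> 'a set \<Rightarrow> bool" where
  "ndeg M X \<longleftrightarrow> (\<forall>v. (\<forall>i. i \<notin> X \<longrightarrow> v i = 0) \<longrightarrow> (\<forall>i\<in>X. (\<Sum>j\<in>X. M i j * v j) = 0) \<longrightarrow> (\<forall>i. v i = 0))"


lemma detb_ndeg:
  assumes fX: "finite X"
  shows "detb M X \<noteq> 0 \<longleftrightarrow> ndeg M X"
proof -
  define n where "n = card X"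
  obtain h where h: "bij_betw h {0..<n} X" using ex_bij_betw_nat_finite[OF fX] n_def by blast
  have inj: "inj_on h {0..<n}" and img: "h ` {0..<n} = X" using h by (auto simp: bij_betw_def)
  define Mj where "Mj = mat n n (\<lambda>(i,j). M (h i) (h j))"
  have Mj: "Mj \<in> carrier_mat n n" by (simp add: Mj_def)
  have "det Mj = detb (\<lambda>i j. M (h i) (h j)) {0..<n}"
    unfolding det_def'[OF Mj] detb_def
  proof (rule sum.cong[OF refl])
    fix p assume "p \<in> {p. p permutes {0..<n}}"
    then have p: "\<And>i. i < n \<Longrightarrow> p i < n" using permutes_in_image by fastforce
    show "signof p * (\<Prod>i = 0..<n. Mj $$ (i, p i)) = (\<Prod>i\<in>{0..<n}. M (h i) (h (p i)))"
      unfolding of_int_sign_bit mult_1_left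
      by (rule prod.cong[OF refl]) (simp add: Mj_def p)
  qed
  also have "\<dots> = detb M X" using detb_relabel[OF inj, of M] img by simp
  finally have dMj: "det Mj = detb M X" .
  have hin: "\<And>l. l < n \<Longrightarrow> h l \<in> X" using h by (auto simp: bij_betw_def)
  let ?hi = "inv_into {0..<n} h"
  have hi: "\<And>a. a \<in> X \<Longrightarrow> ?hi a < n \<and> h (?hi a) = a"
    using h by (metis atLeastLessThan_iff bij_betw_def bij_betw_inv_into_right inv_into_into img)
  have sumeq: "(\<Sum>l\<in>{0..<n}. M (h k) (h l) * u (h l)) = (\<Sum>j\<in>X. M (h k) j * u j)" for k u
    using sum.reindex[OF inj, of "\<lambda>j. M (h k) j * u j"] unfolding img comp_def by (rule sym)
  have mv: "\<And>k v. k < n \<Longrightarrow> v \<in> carrier_vec n \<Longrightarrow> (Mj *\<^sub>v v) $ k = (\<Sum>l\<in>{0..<n}. M (h k) (h l) * v $ l)"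
    by (simp add: Mj_def scalar_prod_def)
  have "(\<exists>v. v \<in> carrier_vec n \<and> v \<noteq> 0\<^sub>v n \<and> Mj *\<^sub>v v = 0\<^sub>v n) \<longleftrightarrow> \<not> ndeg M X"
  proof
    assume "\<exists>v. v \<in> carrier_vec n \<and> v \<noteq> 0\<^sub>v n \<and> Mj *\<^sub>v v = 0\<^sub>v n"
    then obtain v where v: "v \<in> carrier_vec n" "v \<noteq> 0\<^sub>v n" "Mj *\<^sub>v v = 0\<^sub>v n" by blast
    define u where "u a = (if a \<in> X then v $ (?hi a) else 0)" for a
    have uh: "\<And>l. l < n \<Longrightarrow> u (h l) = v $ l"
      using hin inj by (simp add: u_def inv_into_f_f)
    obtain l where l: "l < n" "v $ l \<noteq> 0" using v(1,2) by (auto simp: vec_eq_iff)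
    have "\<not> (\<forall>i. u i = 0)" using uh l by metis
    moreover have "\<forall>i. i \<notin> X \<longrightarrow> u i = 0" by (simp add: u_def)
    moreover have "\<forall>i\<in>X. (\<Sum>j\<in>X. M i j * u j) = 0"
    proof
      fix i assume i: "i \<in> X"
      have "(\<Sum>j\<in>X. M i j * u j) = (\<Sum>l\<in>{0..<n}. M (h (?hi i)) (h l) * u (h l))"
        using sumeq[of "?hi i" u] hi[OF i] by simp
      also have "\<dots> = (\<Sum>l\<in>{0..<n}. M (h (?hi i)) (h l) * v $ l)"
        by (rule sum.cong[OF refl]) (simp add: uh)
      also have "\<dots> = (Mj *\<^sub>v v) $ (?hi i)" using mv hi[OF i] v(1) by simp
      also have "\<dots> = 0" using v(3) hi[OF i] by simp
      finally show "(\<Sum>j\<in>X. M i j * u j) = 0" .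
    qed
    ultimately show "\<not> ndeg M X" unfolding ndeg_def by blast
  next
    assume "\<not> ndeg M X"
    then obtain u where u0: "\<forall>i. i \<notin> X \<longrightarrow> u i = 0" and uk: "\<forall>i\<in>X. (\<Sum>j\<in>X. M i j * u j) = 0"
      and un: "\<not> (\<forall>i. u i = 0)" unfolding ndeg_def by blast
    define v where "v = vec n (\<lambda>l. u (h l))"
    have vc: "v \<in> carrier_vec n" by (simp add: v_def carrier_vecI)
    obtain i where i: "u i \<noteq> 0" using un by blast
    then have iX: "i \<in> X" using u0 by blast
    have "v $ (?hi i) \<noteq> 0" using hi[OF iX] i by (simp add: v_def)
    then have vn: "v \<noteq> 0\<^sub>v n" using hi[OF iX] by auto
    have "Mj *\<^sub>v v = 0\<^sub>v n"
    proof (rule eq_vecI)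
      fix k assume "k < dim_vec (0\<^sub>v n :: bit vec)"
      then have k: "k < n" by simp
      have "(Mj *\<^sub>v v) $ k = (\<Sum>l\<in>{0..<n}. M (h k) (h l) * v $ l)" using mv[OF k vc] .
      also have "\<dots> = (\<Sum>l\<in>{0..<n}. M (h k) (h l) * u (h l))"
        by (rule sum.cong[OF refl]) (simp add: v_def)
      also have "\<dots> = (\<Sum>j\<in>X. M (h k) j * u j)" by (rule sumeq)
      also have "\<dots> = 0" using uk hin[OF k] by blast
      finally show "(Mj *\<^sub>v v) $ k = 0\<^sub>v n $ k" using k by simp
    qed (simp add: Mj_def)
    then show "\<exists>v. v \<in> carrier_vec n \<and> v \<noteq> 0\<^sub>v n \<and> Mj *\<^sub>v v = 0\<^sub>v n" using vc vn by blast
  qed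
  then show ?thesis using det_0_iff_vec_prod_zero_field[OF Mj] dMj by simp
qed


definition mv :: "('a \<Rightarrow> 'a \<Rightarrow> bit) \<Rightarrow> 'a set \<Rightarrow> ('a \<Rightarrow> bit) \<Rightarrow> 'a \<Rightarrow> bit" where
  "mv M V u i = (\<Sum>k\<in>V. M i k * u k)"

lemma sum_supp:
  assumes "finite V" "Y \<subseteq> V" "\<And>k. k \<notin> Y \<Longrightarrow> u k = 0"
  shows "(\<Sum>k\<in>V. M i k * u k) = (\<Sum>k\<in>Y. M i k * (u k :: bit))"
  by (rule sum.mono_neutral_right) (use assms in auto)

lemma swap_kernel:
  assumes fin: "finite V" "S \<subseteq> V" "Y \<subseteq> V"
    and H: "\<And>u. (\<forall>i. i \<notin> V \<longrightarrow> u i = 0) \<Longrightarrow>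
       \<forall>i\<in>V. (if i \<in> S then u i else mv M V u i) = mv M' V (\<lambda>k. if k \<in> S then mv M V u k else u k) i"
    and nd: "ndeg M' (symdiff Y S)"
  shows "ndeg M Y"
  unfolding ndeg_def
proof (intro allI impI)
  fix u i assume u0: "\<forall>i. i \<notin> Y \<longrightarrow> u i = 0" and uk: "\<forall>i\<in>Y. (\<Sum>j\<in>Y. M i j * u j) = 0"
  let ?Z = "symdiff Y S"
  define u' where "u' k = (if k \<in> S then mv M V u k else u k)" for k
  have mvY: "\<And>i. mv M V u i = (\<Sum>j\<in>Y. M i j * u j)"
    unfolding mv_def by (rule sum_supp) (use fin u0 in auto)
  have uV: "\<forall>i. i \<notin> V \<longrightarrow> u i = 0" using u0 fin by blast
  have H': "\<And>i. i \<in> V \<Longrightarrow> (if i \<in> S then u i else mv M V u i) = mv M' V u' i"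
    using H[OF uV] unfolding u'_def by blast
  have ZV: "?Z \<subseteq> V" using fin by (auto simp: symdiff_def)
  have a: "\<forall>i. i \<notin> ?Z \<longrightarrow> u' i = 0"
    using u0 uk mvY by (auto simp: u'_def symdiff_def)
  have b: "\<forall>i\<in>?Z. (\<Sum>j\<in>?Z. M' i j * u' j) = 0"
  proof
    fix i assume i: "i \<in> ?Z"
    have "(\<Sum>j\<in>?Z. M' i j * u' j) = mv M' V u' i"
      unfolding mv_def by (rule sum_supp[symmetric]) (use fin ZV a in auto)
    also have "\<dots> = (if i \<in> S then u i else mv M V u i)"
    proof -
      have iV: "i \<in> V" using i ZV by blast
      show ?thesis using H'[OF iV] by simp
    qed
    also have "\<dots> = 0" using i u0 uk mvY by (auto simp: symdiff_def)
    finally show "(\<Sum>j\<in>?Z. M' i j * u' j) = 0" .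
  qed
  have u'0: "\<forall>i. u' i = 0" using nd a b unfolding ndeg_def by blast
  show "u i = 0"
  proof (cases "i \<in> S")
    case True
    then have "i \<in> V" using fin by auto
    have "mv M' V u' i = 0" using u'0 by (simp add: mv_def)
    then show ?thesis using H'[OF \<open>i \<in> V\<close>] True by simp
  next
    case False
    then show ?thesis using u'0[rule_format, of i] by (simp add: u'_def)
  qed
qed

lemma symdiff_symdiff: "symdiff (symdiff X S) S = X"
  by (auto simp: symdiff_def)

lemma swap_ndeg_iff:
  assumes fin: "finite V" "S \<subseteq> V" "X \<subseteq> V"
    and H1: "\<And>u. (\<forall>i. i \<notin> V \<longrightarrow> u i = 0) \<Longrightarrow>
       \<forall>i\<in>V. (if i \<in> S then u i else mv M V u i) = mv M' V (\<lambda>k. if k \<in> S then mv M V u k else u k) i"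
    and H2: "\<And>u. (\<forall>i. i \<notin> V \<longrightarrow> u i = 0) \<Longrightarrow>
       \<forall>i\<in>V. (if i \<in> S then u i else mv M' V u i) = mv M V (\<lambda>k. if k \<in> S then mv M' V u k else u k) i"
  shows "ndeg M' X \<longleftrightarrow> ndeg M (symdiff X S)"
proof
  assume "ndeg M' X"
  moreover have "symdiff X S \<subseteq> V" using fin by (auto simp: symdiff_def)
  ultimately show "ndeg M (symdiff X S)"
    using swap_kernel[OF fin(1,2) _ H1, of "symdiff X S"] by (simp only: symdiff_symdiff)
next
  assume "ndeg M (symdiff X S)"
  then show "ndeg M' X"
    by (intro swap_kernel[OF fin(1,2,3) H2])
qed


lemma bit_add_self2: "(x::bit) + (x + y) = y" using bit_cases[of x] bit_cases[of y] by auto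

lemma alg1: "(x::bit) = (x + U) + U" using bit_cases[of x] bit_cases[of U] by auto
lemma alg2: "(b::bit) * x + S = b * (x + U) + (S + b * U)"
  using bit_cases[of x] bit_cases[of U] bit_cases[of b] bit_cases[of S] by auto

definition piv1 :: "('a \<Rightarrow> 'a \<Rightarrow> bool) \<Rightarrow> 'a \<Rightarrow> 'a \<Rightarrow> 'a \<Rightarrow> bool" where
  "piv1 A e i j = (if i = e \<or> j = e then A i j else A i j \<noteq> (A i e \<and> A e j))"

lemma mv_remove: "finite V \<Longrightarrow> e \<in> V \<Longrightarrow> mv N V v i = N i e * v e + (\<Sum>k\<in>V-{e}. N i k * v k)"
  unfolding mv_def by (rule sum.remove)

lemma piv1_H:
  assumes V: "finite V" "e \<in> V" and Aee: "A e e"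
  shows "(\<forall>i. i \<notin> V \<longrightarrow> u i = 0) \<Longrightarrow> \<forall>i\<in>V. (if i \<in> {e} then u i else mv (bm A) V u i) =
     mv (bm (piv1 A e)) V (\<lambda>k. if k \<in> {e} then mv (bm A) V u k else u k) i"
proof (intro ballI)
  fix i assume i: "i \<in> V"
  define B where "B = bm A"
  define B' where "B' = bm (piv1 A e)"
  define u' where "u' = (\<lambda>k. if k \<in> {e} then mv B V u k else u k)"
  define U where "U = (\<Sum>k\<in>V-{e}. B e k * u k)"
  have Bee: "B e e = 1" using Aee by (simp add: B_def bm_def)
  have mve: "mv B V u e = u e + U" unfolding mv_remove[OF V] Bee U_def by simp
  have u'e: "u' e = u e + U" using mve by (simp add: u'_def)
  have sR: "(\<Sum>k\<in>V-{e}. B' i k * u' k) = (\<Sum>k\<in>V-{e}. B' i k * u k)"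
    by (rule sum.cong) (auto simp: u'_def)
  show "(if i \<in> {e} then u i else mv B V u i) = mv B' V u' i"
  proof (cases "i = e")
    case True
    have "(\<Sum>k\<in>V-{e}. B' e k * u k) = U" unfolding U_def
      by (rule sum.cong) (auto simp: B'_def B_def bm_def piv1_def)
    moreover have "B' e e = 1" using Aee by (simp add: B'_def bm_def piv1_def)
    ultimately show ?thesis using True unfolding mv_remove[OF V, of B' u'] sR u'e
      by (simp only: mult_1_left singleton_iff eq_self_T if_True alg1[symmetric])
  next
    case False
    have "(\<Sum>k\<in>V-{e}. B' i k * u k) = (\<Sum>k\<in>V-{e}. B i k * u k + B i e * (B e k * u k))"
      by (rule sum.cong) (use False in \<open>auto simp: B'_def B_def bm_of_bool of_bool_add_bit piv1_def\<close>)
    also have "\<dots> = (\<Sum>k\<in>V-{e}. B i k * u k) + B i e * U"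
      unfolding U_def sum_distrib_left by (rule sum.distrib)
    finally have s: "(\<Sum>k\<in>V-{e}. B' i k * u k) = (\<Sum>k\<in>V-{e}. B i k * u k) + B i e * U" .
    have "B' i e = B i e" using False by (simp add: B'_def B_def bm_def piv1_def)
    then show ?thesis using False unfolding mv_remove[OF V, of B' u'] mv_remove[OF V, of B u] sR u'e s
      by (simp only: singleton_iff if_False alg2[symmetric])
  qed
qed


definition piv2 :: "('a \<Rightarrow> 'a \<Rightarrow> bool) \<Rightarrow> 'a \<Rightarrow> 'a \<Rightarrow> 'a \<Rightarrow> 'a \<Rightarrow> bool" where
  "piv2 A e f i k = (let c = A f f in
     if i = e \<and> k = e then c
     else if (i = e \<and> k = f) \<or> (i = f \<and> k = e) then True
     else if i = f \<and> k = f then False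
     else if i = e then (c \<and> A e k) \<noteq> A f k
     else if k = e then (c \<and> A i e) \<noteq> A i f
     else if i = f then A e k
     else if k = f then A i e
     else ((A i k \<noteq> (c \<and> A i e \<and> A e k)) \<noteq> ((A i e \<and> A f k) \<noteq> (A i f \<and> A e k))))"

lemma of_bool_mult_bit: "(of_bool P :: bit) * of_bool Q = of_bool (P \<and> Q)" by simp

lemma mv_remove2:
  assumes "finite V" "e \<in> V" "f \<in> V" "e \<noteq> f"
  shows "mv N V v i = N i e * v e + N i f * v f + (\<Sum>k\<in>V-{e,f}. N i k * v k)"
proof -
  have "mv N V v i = N i e * v e + (\<Sum>k\<in>V-{e}. N i k * v k)" by (rule mv_remove[OF assms(1,2)])
  also have "(\<Sum>k\<in>V-{e}. N i k * v k) = N i f * v f + (\<Sum>k\<in>V-{e}-{f}. N i k * v k)"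
    by (rule sum.remove) (use assms in auto)
  also have "V - {e} - {f} = V - {e, f}" by auto
  finally show ?thesis by (simp only: add.assoc)
qed

lemma alg_e: "(ue::bit) = c * (uf + Ue) + (ue + c * uf + Uf) + (c * Ue + Uf)"
  using bit_cases[of c] bit_cases[of ue] bit_cases[of uf] bit_cases[of Ue] bit_cases[of Uf] by auto

lemma alg_f: "(uf::bit) = (uf + Ue) + 0 * x + Ue"
  using bit_cases[of uf] bit_cases[of Ue] by auto

lemma alg_i: "(bie::bit) * ue + bif * uf + Ui =
   (c * bie + bif) * (uf + Ue) + bie * (ue + c * uf + Uf) + (Ui + c * (bie * Ue) + bie * Uf + bif * Ue)"
  using bit_cases[of c] bit_cases[of ue] bit_cases[of uf] bit_cases[of Ue] bit_cases[of Uf]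
    bit_cases[of bie] bit_cases[of bif] bit_cases[of Ui] by auto

lemma piv2_H:
  assumes V: "finite V" "e \<in> V" "f \<in> V" "e \<noteq> f" and A: "\<not> A e e" "A e f" "A f e"
  shows "(\<forall>i. i \<notin> V \<longrightarrow> u i = 0) \<Longrightarrow> \<forall>i\<in>V. (if i \<in> {e, f} then u i else mv (bm A) V u i) =
     mv (bm (piv2 A e f)) V (\<lambda>k. if k \<in> {e, f} then mv (bm A) V u k else u k) i"
proof (intro ballI)
  fix i assume i: "i \<in> V"
  define B where "B = bm A"
  define B' where "B' = bm (piv2 A e f)"
  define c where "c = B f f"
  define u' where "u' = (\<lambda>k. if k \<in> {e, f} then mv B V u k else u k)"
  define R where "R = V - {e, f}"
  define Ue where "Ue = (\<Sum>k\<in>R. B e k * u k)"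
  define Uf where "Uf = (\<Sum>k\<in>R. B f k * u k)"
  note mr = mv_remove2[OF V, folded R_def]
  have Bv: "B e e = 0" "B e f = 1" "B f e = 1" using A by (simp_all add: B_def bm_def)
  have we: "mv B V u e = uf + Ue" if "uf = u f" for uf
    unfolding mr Bv Ue_def that by simp
  have u'e: "u' e = u f + Ue" using we[OF refl] by (simp add: u'_def)
  have wf: "mv B V u f = u e + c * u f + Uf"
    unfolding mr Bv Uf_def c_def by simp
  have u'f: "u' f = u e + c * u f + Uf" using wf V(4) by (simp add: u'_def)
  have sR: "\<And>N. (\<Sum>k\<in>R. N k * u' k) = (\<Sum>k\<in>R. N k * u k)"
    by (rule sum.cong) (auto simp: u'_def R_def)
  have pe: "\<And>k. k \<in> R \<Longrightarrow> B' e k = c * B e k + B f k"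
    using V(4) by (auto simp: B'_def B_def c_def R_def bm_of_bool of_bool_add_bit of_bool_mult_bit piv2_def Let_def)
  have pf: "\<And>k. k \<in> R \<Longrightarrow> B' f k = B e k"
    using V(4) by (auto simp: B'_def B_def R_def bm_of_bool piv2_def Let_def)
  show "(if i \<in> {e, f} then u i else mv B V u i) = mv B' V u' i"
  proof -
    consider "i = e" | "i = f" | "i \<in> R" using i by (auto simp: R_def)
    then show ?thesis
    proof cases
      case 1
      have b: "B' e e = c" "B' e f = 1" using V(4) by (simp_all add: B'_def B_def c_def bm_def piv2_def Let_def)
      have "(\<Sum>k\<in>R. B' e k * u k) = (\<Sum>k\<in>R. c * (B e k * u k) + B f k * u k)"
        by (rule sum.cong[OF refl]) (simp only: pe distrib_right mult.assoc)
      also have "\<dots> = c * Ue + Uf" unfolding Ue_def Uf_def sum_distrib_left by (rule sum.distrib)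
      finally have s: "(\<Sum>k\<in>R. B' e k * u k) = c * Ue + Uf" .
      show ?thesis unfolding 1 mr[of B' u' e] sR b u'e u'f s
        by (simp only: insert_iff eq_self_T simp_thms if_True mult_1_left alg_e[symmetric])
    next
      case 2
      have b: "B' f e = 1" "B' f f = 0" using V(4) by (simp_all add: B'_def B_def bm_def piv2_def Let_def)
      have s: "(\<Sum>k\<in>R. B' f k * u k) = Ue" unfolding Ue_def by (rule sum.cong[OF refl]) (simp only: pf)
      show ?thesis unfolding 2 mr[of B' u' f] sR b u'e u'f s
        by (simp only: insert_iff eq_self_T simp_thms if_True mult_1_left alg_f[symmetric])
    next
      case 3
      then have ie: "i \<noteq> e" "i \<noteq> f" by (auto simp: R_def)
      have b: "B' i e = c * B i e + B i f" "B' i f = B i e" using ie V(4)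
        by (simp_all add: B'_def B_def c_def bm_of_bool of_bool_add_bit of_bool_mult_bit piv2_def Let_def)
      have pk: "\<And>k. k \<in> R \<Longrightarrow> B' i k = B i k + c * B i e * B e k + B i e * B f k + B i f * B e k"
        using ie by (auto simp: R_def B'_def B_def c_def bm_of_bool of_bool_add_bit of_bool_mult_bit piv2_def Let_def)
      have "(\<Sum>k\<in>R. B' i k * u k) = (\<Sum>k\<in>R. B i k * u k + c * (B i e * (B e k * u k)) + B i e * (B f k * u k) + B i f * (B e k * u k))"
        by (rule sum.cong[OF refl]) (simp only: pk distrib_right mult.assoc)
      also have "\<dots> = (\<Sum>k\<in>R. B i k * u k) + c * (B i e * Ue) + B i e * Uf + B i f * Ue"
        unfolding Ue_def Uf_def sum_distrib_left sum.distrib ..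
      finally have s: "(\<Sum>k\<in>R. B' i k * u k) = (\<Sum>k\<in>R. B i k * u k) + c * (B i e * Ue) + B i e * Uf + B i f * Ue" .
      show ?thesis using ie unfolding mr[of B' u' i] mr[of B u i] sR b u'e u'f s
        by (simp only: insert_iff empty_iff simp_thms if_False alg_i[symmetric])
    qed
  qed
qed


lemma framed_sym: "framed_graph V A \<Longrightarrow> i \<in> V \<Longrightarrow> j \<in> V \<Longrightarrow> A i j = A j i"
  by (simp add: framed_graph_def)

lemma piv1_framed:
  assumes fr: "framed_graph V A" and e: "e \<in> V"
  shows "framed_graph V (piv1 A e)"
  unfolding framed_graph_def
proof (intro conjI ballI)
  show "finite V" using fr by (simp add: framed_graph_def)
  fix i j assume ij: "i \<in> V" "j \<in> V"
  note s = framed_sym[OF fr]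
  show "piv1 A e i j = piv1 A e j i"
    using s[OF ij] s[OF ij(1) e] s[OF ij(2) e] unfolding piv1_def by auto
qed

lemma piv1_piv1: "piv1 (piv1 A e) e = A"
  unfolding piv1_def by (auto simp: fun_eq_iff)

lemma piv1_ee: "piv1 A e e e = A e e" by (simp add: piv1_def)

lemma piv1_ndeg:
  assumes V: "finite V" "e \<in> V" "X \<subseteq> V" and Aee: "A e e"
  shows "ndeg (bm (piv1 A e)) X \<longleftrightarrow> ndeg (bm A) (symdiff X {e})"
proof (rule swap_ndeg_iff[OF V(1) _ V(3)])
  show "{e} \<subseteq> V" using V by simp
  fix u :: "'a \<Rightarrow> bit" assume "\<forall>i. i \<notin> V \<longrightarrow> u i = 0"
  then show "\<forall>i\<in>V. (if i \<in> {e} then u i else mv (bm A) V u i) =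
     mv (bm (piv1 A e)) V (\<lambda>k. if k \<in> {e} then mv (bm A) V u k else u k) i"
    by (rule piv1_H[of V e A, OF V(1,2) Aee])
  show "\<forall>i\<in>V. (if i \<in> {e} then u i else mv (bm (piv1 A e)) V u i) =
     mv (bm A) V (\<lambda>k. if k \<in> {e} then mv (bm (piv1 A e)) V u k else u k) i"
    using piv1_H[of V e "piv1 A e" u, OF V(1,2) _ \<open>\<forall>i. i \<notin> V \<longrightarrow> u i = 0\<close>] Aee
    unfolding piv1_piv1 piv1_ee by blast
qed

lemma piv2_framed:
  assumes "framed_graph V A" "e \<in> V" "f \<in> V"
  shows "framed_graph V (piv2 A e f)"
  unfolding framed_graph_def
proof (intro conjI ballI)
  show "finite V" using assms by (simp add: framed_graph_def)
  fix i j assume ij: "i \<in> V" "j \<in> V"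
  note s = framed_sym[OF assms(1)]
  show "piv2 A e f i j = piv2 A e f j i"
    using s[OF ij] s[OF ij(1) assms(2)] s[OF ij(1) assms(3)] s[OF ij(2) assms(2)] s[OF ij(2) assms(3)] s[OF assms(2,3)]
    unfolding piv2_def Let_def by auto
qed

lemma piv2_piv2:
  assumes "e \<noteq> f" "\<not> A e e" "A e f" "A f e"
  shows "piv2 (piv2 A e f) f e i k = A i k"
  using assms unfolding piv2_def Let_def by auto

lemma piv2_ndeg:
  assumes V: "finite V" "e \<in> V" "f \<in> V" "e \<noteq> f" "X \<subseteq> V" and A: "\<not> A e e" "A e f" "A f e"
  shows "ndeg (bm (piv2 A e f)) X \<longleftrightarrow> ndeg (bm A) (symdiff X {e, f})"
proof (rule swap_ndeg_iff[OF V(1) _ V(5)])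
  show "{e, f} \<subseteq> V" using V by simp
  fix u :: "'a \<Rightarrow> bit" assume u: "\<forall>i. i \<notin> V \<longrightarrow> u i = 0"
  then show "\<forall>i\<in>V. (if i \<in> {e, f} then u i else mv (bm A) V u i) =
     mv (bm (piv2 A e f)) V (\<lambda>k. if k \<in> {e, f} then mv (bm A) V u k else u k) i"
    by (rule piv2_H[of V e f A, OF V(1-4) A])
  let ?A' = "piv2 A e f"
  have A': "\<not> ?A' f f" "?A' f e" "?A' e f" using V(4) by (auto simp: piv2_def Let_def)
  have H: "\<forall>i\<in>V. (if i \<in> {f, e} then u i else mv (bm ?A') V u i) =
     mv (bm (piv2 ?A' f e)) V (\<lambda>k. if k \<in> {f, e} then mv (bm ?A') V u k else u k) i"
    by (rule piv2_H[of V f e ?A', OF V(1,3,2) V(4)[symmetric] A' u])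
  have fe: "{f, e} = {e, f}" by auto
  have mveq: "\<And>v i. mv (bm (piv2 ?A' f e)) V v i = mv (bm A) V v i"
    unfolding mv_def bm_def using piv2_piv2[OF V(4) A] by simp
  show "\<forall>i\<in>V. (if i \<in> {e, f} then u i else mv (bm ?A') V u i) =
     mv (bm A) V (\<lambda>k. if k \<in> {e, f} then mv (bm ?A') V u k else u k) i"
    using H unfolding fe mveq .
qed

lemma det_ndeg: "finite X \<Longrightarrow> det_F2 A X \<noteq> 0 \<longleftrightarrow> ndeg (bm A) X"
  unfolding det_F2_detb by (rule detb_ndeg)

lemma elem_pivot:
  assumes fr: "framed_graph V A" and X: "X \<subseteq> V" "e \<in> X" and d: "det_F2 A X \<noteq> 0"
  shows "\<exists>A' S. framed_graph V A' \<and> e \<in> S \<and> S \<subseteq> X \<and>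
     (\<forall>Y. Y \<subseteq> V \<longrightarrow> (det_F2 A' Y \<noteq> 0 \<longleftrightarrow> det_F2 A (symdiff Y S) \<noteq> 0))"
proof -
  have fV: "finite V" using fr by (simp add: framed_graph_def)
  have eV: "e \<in> V" using X by auto
  have fin: "\<And>Y. Y \<subseteq> V \<Longrightarrow> finite Y" using fV finite_subset by blast
  have sdV: "\<And>Y S. Y \<subseteq> V \<Longrightarrow> S \<subseteq> V \<Longrightarrow> symdiff Y S \<subseteq> V" by (auto simp: symdiff_def)
  show ?thesis
  proof (cases "A e e")
    case True
    have "\<forall>Y. Y \<subseteq> V \<longrightarrow> (det_F2 (piv1 A e) Y \<noteq> 0 \<longleftrightarrow> det_F2 A (symdiff Y {e}) \<noteq> 0)"
    proof (intro allI impI)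
      fix Y assume Y: "Y \<subseteq> V"
      have s: "{e} \<subseteq> V" using eV by simp
      show "det_F2 (piv1 A e) Y \<noteq> 0 \<longleftrightarrow> det_F2 A (symdiff Y {e}) \<noteq> 0"
        unfolding det_ndeg[OF fin[OF Y]] det_ndeg[OF fin[OF sdV[OF Y s]]]
        by (rule piv1_ndeg[of V e Y A, OF fV eV Y True])
    qed
    then show ?thesis using piv1_framed[OF fr eV] X by blast
  next
    case False
    have nd: "ndeg (bm A) X" using d det_ndeg[OF fin[OF X(1)]] by blast
    have "\<exists>f\<in>X. A e f"
    proof (rule ccontr)
      assume "\<not> (\<exists>f\<in>X. A e f)"
      then have z: "\<And>f. f \<in> X \<Longrightarrow> \<not> A f e" using framed_sym[OF fr] X by blast
      define v where "v i = (if i = e then 1 else (0::bit))" for i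
      have "\<forall>i\<in>X. (\<Sum>j\<in>X. bm A i j * v j) = 0"
      proof
        fix i assume i: "i \<in> X"
        have "(\<Sum>j\<in>X. bm A i j * v j) = bm A i e * v e + (\<Sum>j\<in>X-{e}. bm A i j * v j)"
          by (rule sum.remove[OF fin[OF X(1)] X(2)])
        also have "(\<Sum>j\<in>X-{e}. bm A i j * v j) = 0" by (rule sum.neutral) (simp add: v_def)
        finally have "(\<Sum>j\<in>X. bm A i j * v j) = bm A i e" by (simp add: v_def)
        then show "(\<Sum>j\<in>X. bm A i j * v j) = 0" using z[OF i] by (simp add: bm_def)
      qed
      moreover have "\<forall>i. i \<notin> X \<longrightarrow> v i = 0" using X by (simp add: v_def)
      ultimately have "\<forall>i. v i = 0" using nd unfolding ndeg_def by blast
      then show False by (metis v_def one_neq_zero)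
    qed
    then obtain f where f: "f \<in> X" "A e f" by blast
    have fV: "f \<in> V" using f X by auto
    have ef: "e \<noteq> f" using f False by auto
    have Afe: "A f e" using f framed_sym[OF fr eV fV] by simp
    have "\<forall>Y. Y \<subseteq> V \<longrightarrow> (det_F2 (piv2 A e f) Y \<noteq> 0 \<longleftrightarrow> det_F2 A (symdiff Y {e, f}) \<noteq> 0)"
    proof (intro allI impI)
      fix Y assume Y: "Y \<subseteq> V"
      have s: "{e, f} \<subseteq> V" using eV fV by simp
      show "det_F2 (piv2 A e f) Y \<noteq> 0 \<longleftrightarrow> det_F2 A (symdiff Y {e, f}) \<noteq> 0"
        unfolding det_ndeg[OF fin[OF Y]] det_ndeg[OF fin[OF sdV[OF Y s]]]
        by (rule piv2_ndeg[of V e f Y A, OF _ eV fV ef Y False f(2) Afe]) (use fr in \<open>simp add: framed_graph_def\<close>)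
    qed
    then show ?thesis using piv2_framed[OF fr eV fV] X f by blast
  qed
qed


definition rep :: "'a set \<Rightarrow> ('a \<Rightarrow> 'a \<Rightarrow> bool) \<Rightarrow> 'a set \<Rightarrow> 'a setsys" where
  "rep V A T = twist (nondeg_dm V A) T"

lemma snd_rep: "snd (rep V A T) = (\<lambda>X. symdiff X T) ` {X. X \<subseteq> V \<and> det_F2 A X \<noteq> 0}"
  by (simp add: rep_def twist_def nondeg_dm_def)

lemma fst_rep[simp]: "fst (rep V A T) = V"
  by (simp add: rep_def twist_def nondeg_dm_def)

lemma det_F2_empty: "det_F2 A {} = 1"
proof -
  have "{p. p permutes ({}::'a set)} = {id}" by auto
  then show ?thesis by (simp add: det_F2_def)
qed

lemma mem_rep: "Z \<in> snd (rep V A T) \<longleftrightarrow> (\<exists>X. X \<subseteq> V \<and> det_F2 A X \<noteq> 0 \<and> Z = symdiff X T)"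
  unfolding snd_rep by blast

lemma mem_rep': assumes T: "T \<subseteq> V" shows "Z \<in> snd (rep V A T) \<longleftrightarrow> Z \<subseteq> V \<and> det_F2 A (symdiff Z T) \<noteq> 0"
  unfolding mem_rep
proof
  assume "\<exists>X. X \<subseteq> V \<and> det_F2 A X \<noteq> 0 \<and> Z = symdiff X T"
  then obtain X where X: "X \<subseteq> V" "det_F2 A X \<noteq> 0" "Z = symdiff X T" by blast
  have "Z \<subseteq> V" using X T by (auto simp: symdiff_def)
  moreover have "symdiff Z T = X" using X(3) by (simp add: symdiff_symdiff)
  ultimately show "Z \<subseteq> V \<and> det_F2 A (symdiff Z T) \<noteq> 0" using X by simp
next
  assume Z: "Z \<subseteq> V \<and> det_F2 A (symdiff Z T) \<noteq> 0"
  have "symdiff Z T \<subseteq> V" using Z T by (auto simp: symdiff_def)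
  moreover have "Z = symdiff (symdiff Z T) T" by (simp add: symdiff_symdiff)
  ultimately show "\<exists>X. X \<subseteq> V \<and> det_F2 A X \<noteq> 0 \<and> Z = symdiff X T" using Z by blast
qed

lemma rep_T: "T \<in> snd (rep V A T)"
  unfolding mem_rep by (rule exI[of _ "{}"]) (simp add: det_F2_empty symdiff_def)

lemma rep_change_aux:
  "\<forall>A T X. framed_graph V A \<longrightarrow> T \<subseteq> V \<longrightarrow> X \<subseteq> V \<longrightarrow> det_F2 A X \<noteq> 0 \<longrightarrow> card X = n \<longrightarrow>
     (\<exists>A'. framed_graph V A' \<and> rep V A' (symdiff X T) = rep V A T)"
proof (induction n rule: less_induct)
  case (less n)
  show ?case
  proof (intro allI impI)
    fix A T X assume fr: "framed_graph V A" and T: "T \<subseteq> V" and X: "X \<subseteq> V" and d: "det_F2 A X \<noteq> 0" and c: "card X = n"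
    have fV: "finite V" using fr by (simp add: framed_graph_def)
    show "\<exists>A'. framed_graph V A' \<and> rep V A' (symdiff X T) = rep V A T"
    proof (cases "X = {}")
      case True
      then show ?thesis using fr by (auto simp: symdiff_def)
    next
      case False
      then obtain e where e: "e \<in> X" by blast
      obtain A1 S where A1: "framed_graph V A1" "e \<in> S" "S \<subseteq> X"
        and eq: "\<And>Y. Y \<subseteq> V \<Longrightarrow> (det_F2 A1 Y \<noteq> 0 \<longleftrightarrow> det_F2 A (symdiff Y S) \<noteq> 0)"
        using elem_pivot[OF fr X e d] by blast
      have SV: "S \<subseteq> V" using A1 X by blast
      have r1: "rep V A1 (symdiff T S) = rep V A T"
      proof -
        have "snd (rep V A1 (symdiff T S)) = snd (rep V A T)"
        proof (rule Set.set_eqI)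
          fix Z
          have TS: "symdiff T S \<subseteq> V" using T SV by (auto simp: symdiff_def)
          have "Z \<in> snd (rep V A1 (symdiff T S)) \<longleftrightarrow> Z \<subseteq> V \<and> det_F2 A1 (symdiff Z (symdiff T S)) \<noteq> 0"
            by (rule mem_rep'[OF TS])
          also have "\<dots> \<longleftrightarrow> Z \<subseteq> V \<and> det_F2 A (symdiff (symdiff Z (symdiff T S)) S) \<noteq> 0"
            using eq[of "symdiff Z (symdiff T S)"] TS by (auto simp: symdiff_def)
          also have "symdiff (symdiff Z (symdiff T S)) S = symdiff Z T" by (auto simp: symdiff_def)
          also have "(Z \<subseteq> V \<and> det_F2 A (symdiff Z T) \<noteq> 0) \<longleftrightarrow> Z \<in> snd (rep V A T)"
            by (rule mem_rep'[OF T, symmetric])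
          finally show "Z \<in> snd (rep V A1 (symdiff T S)) \<longleftrightarrow> Z \<in> snd (rep V A T)" .
        qed
        then show ?thesis by (simp add: prod_eq_iff)
      qed
      define X1 where "X1 = X - S"
      have X1: "X1 \<subseteq> V" using X by (auto simp: X1_def)
      have fX: "finite X" using X fV finite_subset by blast
      have cX1: "card X1 < n" unfolding X1_def c[symmetric]
        by (rule psubset_card_mono[OF fX]) (use A1(2,3) in auto)
      have "symdiff X1 S = X" using A1(3) by (auto simp: X1_def symdiff_def)
      then have d1: "det_F2 A1 X1 \<noteq> 0" using eq[OF X1] d by simp
      have T1: "symdiff T S \<subseteq> V" using T SV by (auto simp: symdiff_def)
      obtain A' where "framed_graph V A'" "rep V A' (symdiff X1 (symdiff T S)) = rep V A1 (symdiff T S)"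
        using less.IH[OF cX1, rule_format, OF A1(1) T1 X1 d1 refl] by blast
      moreover have "symdiff X1 (symdiff T S) = symdiff X T" using A1(3) by (auto simp: X1_def symdiff_def)
      ultimately show ?thesis using r1 by auto
    qed
  qed
qed

lemma rep_change:
  assumes "framed_graph V A" "T \<subseteq> V" "\<phi> \<in> snd (rep V A T)"
  shows "\<exists>A'. framed_graph V A' \<and> rep V A' \<phi> = rep V A T"
proof -
  obtain X where X: "X \<subseteq> V" "det_F2 A X \<noteq> 0" "\<phi> = symdiff X T" using assms(3) unfolding mem_rep by blast
  show ?thesis using rep_change_aux[rule_format, OF assms(1,2) X(1,2) refl] X(3) by blast
qed


lemma rep_binary:
  assumes "framed_graph V A" "T \<subseteq> V"
  shows "binary_dm (rep V A T)"
  unfolding binary_dm_def fst_rep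
proof (intro exI conjI)
  show "framed_graph V A" "T \<subseteq> V" by fact+
  show "ss_iso (twist (nondeg_dm V A) T) (rep V A T)"
    unfolding ss_iso_def rep_def by (rule exI[of _ id]) (simp add: twist_def nondeg_dm_def)
qed

lemma binary_rep:
  assumes "binary_dm D"
  shows "\<exists>A T. framed_graph (fst D) A \<and> T \<subseteq> fst D \<and> D = rep (fst D) A T"
proof -
  obtain A T where fr: "framed_graph (fst D) A" and T: "T \<subseteq> fst D"
    and iso: "ss_iso (rep (fst D) A T) D"
    using assms unfolding binary_dm_def rep_def by blast
  define V where "V = fst D"
  obtain g where g: "bij_betw g V V" and sD: "snd D = (\<lambda>\<phi>. g ` \<phi>) ` snd (rep V A T)"
    using iso unfolding ss_iso_def V_def by auto
  have inj: "inj_on g V" and gV: "g ` V = V" using g by (auto simp: bij_betw_def)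
  define h where "h = inv_into V g"
  have injh: "inj_on h V" unfolding h_def using gV by (simp add: inj_on_inv_into)
  have hg: "\<And>x. x \<in> V \<Longrightarrow> h (g x) = x" unfolding h_def using inj by (simp add: inv_into_f_f)
  have gh: "\<And>x. x \<in> V \<Longrightarrow> g (h x) = x" unfolding h_def using gV by (simp add: f_inv_into_f)
  have hV: "\<And>x. x \<in> V \<Longrightarrow> h x \<in> V" unfolding h_def using gV by (metis inv_into_into)
  define A' where "A' i j = A (h i) (h j)" for i j
  define T' where "T' = g ` T"
  have fV: "finite V" using fr by (simp add: framed_graph_def V_def)
  have frA': "framed_graph V A'"
    using fr hV unfolding framed_graph_def A'_def V_def by auto
  have T': "T' \<subseteq> V" using T gV by (auto simp: T'_def V_def)
  have detA': "\<And>Y. Y \<subseteq> V \<Longrightarrow> det_F2 A' Y = det_F2 A (h ` Y)"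
  proof -
    fix Y assume Y: "Y \<subseteq> V"
    have "inj_on h Y" using injh Y inj_on_subset by blast
    moreover have "bm A' = (\<lambda>i j. bm A (h i) (h j))" by (simp add: A'_def bm_def fun_eq_iff)
    ultimately show "det_F2 A' Y = det_F2 A (h ` Y)"
      unfolding det_F2_detb using detb_relabel[of h Y "bm A"] by simp
  qed
  have sd: "\<And>X. X \<subseteq> V \<Longrightarrow> g ` (symdiff X T) = symdiff (g ` X) T'"
  proof -
    fix X assume X: "X \<subseteq> V"
    have TV: "T \<subseteq> V" using T by (simp add: V_def)
    have 1: "g ` (X - T) = g ` X - g ` T" by (rule inj_on_image_set_diff[OF inj]) (use X TV in auto)
    have 2: "g ` (T - X) = g ` T - g ` X" by (rule inj_on_image_set_diff[OF inj]) (use X TV in auto)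
    show "g ` (symdiff X T) = symdiff (g ` X) T'" unfolding symdiff_def T'_def image_Un 1 2 ..
  qed
  have "snd D = snd (rep V A' T')"
  proof (rule Set.set_eqI)
    fix Z
    show "Z \<in> snd D \<longleftrightarrow> Z \<in> snd (rep V A' T')"
    proof
      assume "Z \<in> snd D"
      then obtain \<phi> where phi: "\<phi> \<in> snd (rep V A T)" "Z = g ` \<phi>" unfolding sD by blast
      then obtain X where X0: "X \<subseteq> V" "det_F2 A X \<noteq> 0" "\<phi> = symdiff X T"
        unfolding mem_rep by blast
      have X: "X \<subseteq> V" "det_F2 A X \<noteq> 0" "Z = g ` (symdiff X T)" using X0 phi by auto
      have "h ` (g ` X) = X" using hg X(1) by (force simp: image_image)
      then have "det_F2 A' (g ` X) \<noteq> 0" using detA'[of "g ` X"] X gV by auto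
      moreover have "g ` X \<subseteq> V" using X gV by auto
      ultimately show "Z \<in> snd (rep V A' T')" unfolding mem_rep X(3) sd[OF X(1)] by blast
    next
      assume "Z \<in> snd (rep V A' T')"
      then obtain Y where Y: "Y \<subseteq> V" "det_F2 A' Y \<noteq> 0" "Z = symdiff Y T'" unfolding mem_rep by blast
      define X where "X = h ` Y"
      have XV: "X \<subseteq> V" using Y hV by (auto simp: X_def)
      have gX: "g ` X = Y" using Y gh by (force simp: X_def image_image)
      have "det_F2 A X \<noteq> 0" using Y detA' by (simp add: X_def)
      moreover have "Z = g ` (symdiff X T)" using sd[OF XV] gX Y(3) by simp
      ultimately have "symdiff X T \<in> snd (rep V A T)" "Z = g ` (symdiff X T)" unfolding mem_rep using XV by blast+
      then show "Z \<in> snd D" unfolding sD by (rule rev_image_eqI)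
    qed
  qed
  then have e3: "D = rep (fst D) A' T'" by (simp add: prod_eq_iff V_def)
  have e1: "framed_graph (fst D) A'" "T' \<subseteq> fst D" using frA' T' by (simp_all add: V_def)
  show ?thesis by (rule exI[of _ A'], rule exI[of _ T'], intro conjI e1 e3)
qed

lemma framed_sub: "framed_graph V A \<Longrightarrow> W \<subseteq> V \<Longrightarrow> framed_graph W A"
  unfolding framed_graph_def using finite_subset by blast

lemma rep_sub: "T \<subseteq> V \<Longrightarrow> \<phi> \<in> snd (rep V A T) \<Longrightarrow> \<phi> \<subseteq> V"
  using mem_rep' by blast

lemma rep_minor_out:
  assumes fr: "framed_graph V A" and phi: "\<phi> \<subseteq> V" "e \<notin> \<phi>"
  shows "(V - {e}, {\<psi> \<in> snd (rep V A \<phi>). e \<notin> \<psi>}) = rep (V - {e}) A \<phi>"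
proof -
  have phi': "\<phi> \<subseteq> V - {e}" using phi by auto
  have "{\<psi> \<in> snd (rep V A \<phi>). e \<notin> \<psi>} = snd (rep (V - {e}) A \<phi>)"
  proof (rule Set.set_eqI)
    fix Z show "Z \<in> {\<psi> \<in> snd (rep V A \<phi>). e \<notin> \<psi>} \<longleftrightarrow> Z \<in> snd (rep (V - {e}) A \<phi>)"
      unfolding mem_rep'[OF phi(1)] mem_rep'[OF phi'] by auto
  qed
  then show ?thesis by (simp add: prod_eq_iff)
qed

lemma rep_minor_in:
  assumes fr: "framed_graph V A" and phi: "\<phi> \<subseteq> V" "e \<in> \<phi>"
  shows "(V - {e}, {\<psi> - {e} | \<psi>. \<psi> \<in> snd (rep V A \<phi>) \<and> e \<in> \<psi>}) = rep (V - {e}) A (\<phi> - {e})"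
proof -
  have phi': "\<phi> - {e} \<subseteq> V - {e}" using phi by auto
  have "{\<psi> - {e} | \<psi>. \<psi> \<in> snd (rep V A \<phi>) \<and> e \<in> \<psi>} = snd (rep (V - {e}) A (\<phi> - {e}))"
  proof (rule Set.set_eqI)
    fix Z
    show "Z \<in> {\<psi> - {e} | \<psi>. \<psi> \<in> snd (rep V A \<phi>) \<and> e \<in> \<psi>} \<longleftrightarrow> Z \<in> snd (rep (V - {e}) A (\<phi> - {e}))"
    proof
      assume "Z \<in> {\<psi> - {e} | \<psi>. \<psi> \<in> snd (rep V A \<phi>) \<and> e \<in> \<psi>}"
      then obtain \<psi> where p: "Z = \<psi> - {e}" "\<psi> \<subseteq> V" "det_F2 A (symdiff \<psi> \<phi>) \<noteq> 0" "e \<in> \<psi>"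
        unfolding mem_rep'[OF phi(1)] by blast
      have "symdiff \<psi> \<phi> = symdiff Z (\<phi> - {e})" using p phi by (auto simp: symdiff_def)
      then show "Z \<in> snd (rep (V - {e}) A (\<phi> - {e}))" unfolding mem_rep'[OF phi'] using p by auto
    next
      assume "Z \<in> snd (rep (V - {e}) A (\<phi> - {e}))"
      then have Z: "Z \<subseteq> V - {e}" "det_F2 A (symdiff Z (\<phi> - {e})) \<noteq> 0" unfolding mem_rep'[OF phi'] by auto
      have "symdiff (insert e Z) \<phi> = symdiff Z (\<phi> - {e})" using Z phi by (auto simp: symdiff_def)
      then have "insert e Z \<in> snd (rep V A \<phi>)" unfolding mem_rep'[OF phi(1)] using Z phi by auto
      moreover have "Z = insert e Z - {e}" using Z by auto
      ultimately show "Z \<in> {\<psi> - {e} | \<psi>. \<psi> \<in> snd (rep V A \<phi>) \<and> e \<in> \<psi>}" by blast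
    qed
  qed
  then show ?thesis by (simp add: prod_eq_iff)
qed

lemma rep_del:
  assumes fr: "framed_graph V A" and T: "T \<subseteq> V" and e: "e \<in> V"
  shows "binary_dm (del (rep V A T) e)"
proof (cases "coloop (rep V A T) e")
  case True
  then have eT: "e \<in> T" using rep_T unfolding coloop_def by blast
  then have nl: "\<not> loop (rep V A T) e" using rep_T unfolding loop_def by blast
  have "del (rep V A T) e = rep (V - {e}) A (T - {e})"
    using rep_minor_in[OF fr T eT] True nl by (simp add: del_def contr_def)
  moreover have "framed_graph (V - {e}) A" by (rule framed_sub[OF fr]) auto
  ultimately show ?thesis using rep_binary[of "V - {e}" A "T - {e}"] T by auto
next
  case False
  then obtain \<phi> where phi: "\<phi> \<in> snd (rep V A T)" "e \<notin> \<phi>" unfolding coloop_def by blast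
  obtain A1 where A1: "framed_graph V A1" "rep V A1 \<phi> = rep V A T" using rep_change[OF fr T phi(1)] by blast
  have pV: "\<phi> \<subseteq> V" using rep_sub[OF T phi(1)] .
  have "del (rep V A T) e = rep (V - {e}) A1 \<phi>"
    using rep_minor_out[OF A1(1) pV phi(2)] False A1(2) by (simp add: del_def)
  moreover have "framed_graph (V - {e}) A1" by (rule framed_sub[OF A1(1)]) auto
  ultimately show ?thesis using rep_binary[of "V - {e}" A1 \<phi>] pV phi(2) by auto
qed

lemma rep_contr:
  assumes fr: "framed_graph V A" and T: "T \<subseteq> V" and e: "e \<in> V"
  shows "binary_dm (contr (rep V A T) e)"
proof (cases "loop (rep V A T) e")
  case True
  then have eT: "e \<notin> T" using rep_T unfolding loop_def by blast
  have "contr (rep V A T) e = rep (V - {e}) A T"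
    using rep_minor_out[OF fr T eT] True by (simp add: contr_def)
  moreover have "framed_graph (V - {e}) A" by (rule framed_sub[OF fr]) auto
  ultimately show ?thesis using rep_binary[of "V - {e}" A T] T eT by auto
next
  case False
  then obtain \<phi> where phi: "\<phi> \<in> snd (rep V A T)" "e \<in> \<phi>" unfolding loop_def by blast
  obtain A1 where A1: "framed_graph V A1" "rep V A1 \<phi> = rep V A T" using rep_change[OF fr T phi(1)] by blast
  have pV: "\<phi> \<subseteq> V" using rep_sub[OF T phi(1)] .
  have "contr (rep V A T) e = rep (V - {e}) A1 (\<phi> - {e})"
    using rep_minor_in[OF A1(1) pV phi(2)] False A1(2) by (simp add: contr_def)
  moreover have "framed_graph (V - {e}) A1" by (rule framed_sub[OF A1(1)]) auto
  ultimately show ?thesis using rep_binary[of "V - {e}" A1 "\<phi> - {e}"] pV by auto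
qed

lemma symdiff_assoc: "symdiff (symdiff X T) B = symdiff X (symdiff T B)"
  by (auto simp: symdiff_def)

lemma rep_twist:
  assumes fr: "framed_graph V A" and T: "T \<subseteq> V" and b: "b \<in> V"
  shows "binary_dm (twist (rep V A T) {b})"
proof -
  have "twist (rep V A T) {b} = rep V A (symdiff T {b})"
    unfolding rep_def twist_def by (simp add: image_image symdiff_assoc)
  moreover have "symdiff T {b} \<subseteq> V" using T b by (auto simp: symdiff_def)
  ultimately show ?thesis using rep_binary[OF fr] by simp
qed

lemma binary_del:
  assumes "binary_dm D" "e \<in> fst D" shows "binary_dm (del D e)"
proof -
  obtain A T where "framed_graph (fst D) A" "T \<subseteq> fst D" "D = rep (fst D) A T" using binary_rep[OF assms(1)] by blast
  then show ?thesis using rep_del[of "fst D" A T e] assms(2) by simp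
qed

lemma binary_contr:
  assumes "binary_dm D" "e \<in> fst D" shows "binary_dm (contr D e)"
proof -
  obtain A T where "framed_graph (fst D) A" "T \<subseteq> fst D" "D = rep (fst D) A T" using binary_rep[OF assms(1)] by blast
  then show ?thesis using rep_contr[of "fst D" A T e] assms(2) by simp
qed

lemma binary_twist:
  assumes "binary_dm D" "b \<in> fst D" shows "binary_dm (twist D {b})"
proof -
  obtain A T where "framed_graph (fst D) A" "T \<subseteq> fst D" "D = rep (fst D) A T" using binary_rep[OF assms(1)] by blast
  then show ?thesis using rep_twist[of "fst D" A T b] assms(2) by simp
qed


lemma bit_ne0: "((x::bit) + y \<noteq> 0) \<longleftrightarrow> ((x \<noteq> 0) \<noteq> (y \<noteq> 0))"
  using bit_cases[of x] bit_cases[of y] by auto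

lemma if_ne0: "((if c then (y::bit) else 0) \<noteq> 0) \<longleftrightarrow> (c \<and> y \<noteq> 0)" by simp

lemma det_congr_iff:
  assumes fr: "framed_graph V A" and X: "X \<subseteq> V" and ab: "a \<in> V" "b \<in> V" "a \<noteq> b"
  shows "det_F2 (congr A a b) X \<noteq> 0 \<longleftrightarrow>
    ((det_F2 A X \<noteq> 0) \<noteq> (a \<in> X \<and> b \<notin> X \<and> det_F2 A (insert b (X - {a})) \<noteq> 0))"
proof -
  have fV: "finite V" using fr by (simp add: framed_graph_def)
  have e: "detb (bm (congr A a b)) X = detb (bm A) X +
     (if a \<in> X \<and> b \<notin> X then detb (bm A) (insert b (X - {a})) else 0)" by (rule det_congr[OF fV X ab framed_sym[OF fr]])
  show ?thesis unfolding det_F2_detb e bit_ne0 if_ne0 conj_assoc ..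
qed

lemma det_flip_iff:
  assumes fr: "framed_graph V A" and X: "X \<subseteq> V" and ab: "a \<in> V" "b \<in> V" "a \<noteq> b"
  shows "det_F2 (flip A a b) X \<noteq> 0 \<longleftrightarrow>
    ((det_F2 A X \<noteq> 0) \<noteq> (a \<in> X \<and> b \<in> X \<and> det_F2 A (X - {a, b}) \<noteq> 0))"
proof -
  have fV: "finite V" using fr by (simp add: framed_graph_def)
  have e: "detb (bm (flip A a b)) X = detb (bm A) X +
     (if a \<in> X \<and> b \<in> X then detb (bm A) (X - {a, b}) else 0)" by (rule det_flip[OF fV X ab framed_sym[OF fr]])
  show ?thesis unfolding det_F2_detb e bit_ne0 if_ne0 conj_assoc ..
qed

lemma congr_framed:
  assumes fr: "framed_graph V A" and ab: "a \<in> V" "b \<in> V"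
  shows "framed_graph V (congr A a b)"
  unfolding framed_graph_def
proof (intro conjI ballI)
  show "finite V" using fr by (simp add: framed_graph_def)
  fix i j assume ij: "i \<in> V" "j \<in> V"
  note s = framed_sym[OF fr]
  show "congr A a b i j = congr A a b j i"
    using s[OF ij] s[OF ij(1) ab(1)] s[OF ij(1) ab(2)] s[OF ij(2) ab(1)] s[OF ij(2) ab(2)]
    unfolding congr_def by (cases "i = a"; cases "j = a"; simp)
qed

lemma flip_framed:
  assumes fr: "framed_graph V A" and ab: "a \<in> V" "b \<in> V"
  shows "framed_graph V (flip A a b)"
  unfolding framed_graph_def
proof (intro conjI ballI)
  show "finite V" using fr by (simp add: framed_graph_def)
  fix i j assume ij: "i \<in> V" "j \<in> V"
  show "flip A a b i j = flip A a b j i"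
    using framed_sym[OF fr ij] unfolding flip_def by (cases "i = a"; cases "j = a"; cases "i = b"; cases "j = b"; simp)
qed

lemma slide_mem:
  assumes "a \<in> V" "a \<noteq> b"
  shows "Z \<in> {\<psi> \<union> {a} | \<psi>. \<psi> \<subseteq> V - {a, b} \<and> \<psi> \<union> {b} \<in> \<Phi>} \<longleftrightarrow>
    (a \<in> Z \<and> b \<notin> Z \<and> Z \<subseteq> V \<and> insert b (Z - {a}) \<in> \<Phi>)"
proof
  assume "Z \<in> {\<psi> \<union> {a} | \<psi>. \<psi> \<subseteq> V - {a, b} \<and> \<psi> \<union> {b} \<in> \<Phi>}"
  then obtain \<psi> where p: "Z = \<psi> \<union> {a}" "\<psi> \<subseteq> V - {a, b}" "\<psi> \<union> {b} \<in> \<Phi>" by blast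
  have "insert b (Z - {a}) = \<psi> \<union> {b}" using p by auto
  then show "a \<in> Z \<and> b \<notin> Z \<and> Z \<subseteq> V \<and> insert b (Z - {a}) \<in> \<Phi>" using p assms by auto
next
  assume Z: "a \<in> Z \<and> b \<notin> Z \<and> Z \<subseteq> V \<and> insert b (Z - {a}) \<in> \<Phi>"
  have "Z = (Z - {a}) \<union> {a}" "Z - {a} \<subseteq> V - {a, b}" "(Z - {a}) \<union> {b} \<in> \<Phi>" using Z by auto
  then show "Z \<in> {\<psi> \<union> {a} | \<psi>. \<psi> \<subseteq> V - {a, b} \<and> \<psi> \<union> {b} \<in> \<Phi>}" by blast
qed

lemma xor_step: "(P \<longleftrightarrow> S \<and> p) \<Longrightarrow> (S \<Longrightarrow> c1 \<Longrightarrow> c2 \<Longrightarrow> (Q \<longleftrightarrow> q)) \<Longrightarrow>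
   ((P \<noteq> (c1 \<and> c2 \<and> S \<and> Q)) \<longleftrightarrow> (S \<and> (p \<noteq> (c1 \<and> c2 \<and> q))))"
  by blast

lemma mem_symdiff: "Z \<in> symdiff P Q \<longleftrightarrow> ((Z \<in> P) \<noteq> (Z \<in> Q))"
  by (auto simp: symdiff_def)

lemma rep_slide1:
  assumes fr: "framed_graph V A" and phi: "\<phi> \<subseteq> V" "a \<notin> \<phi>" "b \<notin> \<phi>" and ab: "a \<in> V" "b \<in> V" "a \<noteq> b"
  shows "slide (rep V A \<phi>) a b = rep V (congr A a b) \<phi>"
proof -
  have "snd (slide (rep V A \<phi>) a b) = snd (rep V (congr A a b) \<phi>)"
  proof (rule Set.set_eqI)
    fix Z
    define X where "X = symdiff Z \<phi>"
    have e1: "a \<in> Z \<longleftrightarrow> a \<in> X" "b \<in> Z \<longleftrightarrow> b \<in> X" using phi by (auto simp: X_def symdiff_def)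
    have e2: "a \<in> Z \<Longrightarrow> b \<notin> Z \<Longrightarrow> symdiff (insert b (Z - {a})) \<phi> = insert b (X - {a})"
      using phi by (auto simp: X_def symdiff_def)
    have ZX: "Z \<subseteq> V \<Longrightarrow> X \<subseteq> V" using phi by (auto simp: X_def symdiff_def)
    have "Z \<in> snd (slide (rep V A \<phi>) a b) \<longleftrightarrow>
      ((Z \<in> snd (rep V A \<phi>)) \<noteq> (a \<in> Z \<and> b \<notin> Z \<and> Z \<subseteq> V \<and> insert b (Z - {a}) \<in> snd (rep V A \<phi>)))"
      unfolding slide_def snd_conv fst_rep mem_symdiff slide_mem[OF ab(1) ab(3)] ..
    also have "\<dots> \<longleftrightarrow> Z \<subseteq> V \<and> ((det_F2 A X \<noteq> 0) \<noteq> (a \<in> X \<and> b \<notin> X \<and> det_F2 A (insert b (X - {a})) \<noteq> 0))"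
    proof -
      have "(Z \<in> snd (rep V A \<phi>)) \<noteq> (a \<in> Z \<and> b \<notin> Z \<and> Z \<subseteq> V \<and> insert b (Z - {a}) \<in> snd (rep V A \<phi>))
         \<longleftrightarrow> Z \<subseteq> V \<and> ((det_F2 A X \<noteq> 0) \<noteq> (a \<in> Z \<and> b \<notin> Z \<and> det_F2 A (insert b (X - {a})) \<noteq> 0))"
      proof (rule xor_step)
        show "Z \<in> snd (rep V A \<phi>) \<longleftrightarrow> Z \<subseteq> V \<and> det_F2 A X \<noteq> 0" unfolding mem_rep'[OF phi(1)] X_def ..
        assume "Z \<subseteq> V" "a \<in> Z" "b \<notin> Z"
        then show "insert b (Z - {a}) \<in> snd (rep V A \<phi>) \<longleftrightarrow> det_F2 A (insert b (X - {a})) \<noteq> 0"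
          unfolding mem_rep'[OF phi(1)] e2[OF \<open>a \<in> Z\<close> \<open>b \<notin> Z\<close>] using ab by auto
      qed
      then show ?thesis unfolding e1 .
    qed
    also have "\<dots> \<longleftrightarrow> Z \<subseteq> V \<and> det_F2 (congr A a b) X \<noteq> 0"
    proof (cases "Z \<subseteq> V")
      case True
      show ?thesis by (simp only: det_congr_iff[OF fr ZX[OF True] ab] True simp_thms)
    next
      case False
      then show ?thesis by simp
    qed
    also have "\<dots> \<longleftrightarrow> Z \<in> snd (rep V (congr A a b) \<phi>)"
      unfolding mem_rep'[OF phi(1)] X_def ..
    finally show "Z \<in> snd (slide (rep V A \<phi>) a b) \<longleftrightarrow> Z \<in> snd (rep V (congr A a b) \<phi>)" .
  qed
  then show ?thesis by (simp add: prod_eq_iff slide_def)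
qed

lemma rep_slide2:
  assumes fr: "framed_graph V A" and phi: "\<phi> \<subseteq> V" "a \<notin> \<phi>" "b \<in> \<phi>" and ab: "a \<in> V" "b \<in> V" "a \<noteq> b"
  shows "slide (rep V A \<phi>) a b = rep V (flip A a b) \<phi>"
proof -
  have "snd (slide (rep V A \<phi>) a b) = snd (rep V (flip A a b) \<phi>)"
  proof (rule Set.set_eqI)
    fix Z
    define X where "X = symdiff Z \<phi>"
    have e1: "a \<in> Z \<longleftrightarrow> a \<in> X" "b \<notin> Z \<longleftrightarrow> b \<in> X" using phi by (auto simp: X_def symdiff_def)
    have e2: "a \<in> Z \<Longrightarrow> b \<notin> Z \<Longrightarrow> symdiff (insert b (Z - {a})) \<phi> = X - {a, b}"
      using phi ab by (auto simp: X_def symdiff_def)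
    have ZX: "Z \<subseteq> V \<Longrightarrow> X \<subseteq> V" using phi by (auto simp: X_def symdiff_def)
    have "Z \<in> snd (slide (rep V A \<phi>) a b) \<longleftrightarrow>
      ((Z \<in> snd (rep V A \<phi>)) \<noteq> (a \<in> Z \<and> b \<notin> Z \<and> Z \<subseteq> V \<and> insert b (Z - {a}) \<in> snd (rep V A \<phi>)))"
      unfolding slide_def snd_conv fst_rep mem_symdiff slide_mem[OF ab(1) ab(3)] ..
    also have "\<dots> \<longleftrightarrow> Z \<subseteq> V \<and> ((det_F2 A X \<noteq> 0) \<noteq> (a \<in> X \<and> b \<in> X \<and> det_F2 A (X - {a, b}) \<noteq> 0))"
    proof -
      have "(Z \<in> snd (rep V A \<phi>)) \<noteq> (a \<in> Z \<and> b \<notin> Z \<and> Z \<subseteq> V \<and> insert b (Z - {a}) \<in> snd (rep V A \<phi>))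
         \<longleftrightarrow> Z \<subseteq> V \<and> ((det_F2 A X \<noteq> 0) \<noteq> (a \<in> Z \<and> b \<notin> Z \<and> det_F2 A (X - {a, b}) \<noteq> 0))"
      proof (rule xor_step)
        show "Z \<in> snd (rep V A \<phi>) \<longleftrightarrow> Z \<subseteq> V \<and> det_F2 A X \<noteq> 0" unfolding mem_rep'[OF phi(1)] X_def ..
        assume "Z \<subseteq> V" "a \<in> Z" "b \<notin> Z"
        then show "insert b (Z - {a}) \<in> snd (rep V A \<phi>) \<longleftrightarrow> det_F2 A (X - {a, b}) \<noteq> 0"
          unfolding mem_rep'[OF phi(1)] e2[OF \<open>a \<in> Z\<close> \<open>b \<notin> Z\<close>] using ab by auto
      qed
      then show ?thesis unfolding e1 .
    qed
    also have "\<dots> \<longleftrightarrow> Z \<subseteq> V \<and> det_F2 (flip A a b) X \<noteq> 0"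
    proof (cases "Z \<subseteq> V")
      case True
      show ?thesis by (simp only: det_flip_iff[OF fr ZX[OF True] ab] True simp_thms)
    next
      case False
      then show ?thesis by simp
    qed
    also have "\<dots> \<longleftrightarrow> Z \<in> snd (rep V (flip A a b) \<phi>)"
      unfolding mem_rep'[OF phi(1)] X_def ..
    finally show "Z \<in> snd (slide (rep V A \<phi>) a b) \<longleftrightarrow> Z \<in> snd (rep V (flip A a b) \<phi>)" .
  qed
  then show ?thesis by (simp add: prod_eq_iff slide_def)
qed

lemma rep_slide3:
  assumes T: "T \<subseteq> V" and all: "\<forall>\<phi>\<in>snd (rep V A T). a \<in> \<phi>" and ab: "a \<in> V" "a \<noteq> b"
  shows "slide (rep V A T) a b = rep V A T"
proof -
  have "{\<phi> \<union> {a} | \<phi>. \<phi> \<subseteq> V - {a, b} \<and> \<phi> \<union> {b} \<in> snd (rep V A T)} = {}"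
  proof (rule Set.set_eqI)
    fix Z show "Z \<in> {\<psi> \<union> {a} | \<psi>. \<psi> \<subseteq> V - {a, b} \<and> \<psi> \<union> {b} \<in> snd (rep V A T)} \<longleftrightarrow> Z \<in> {}"
      unfolding slide_mem[OF ab] using all ab(2) by auto
  qed
  then show ?thesis unfolding slide_def fst_rep by (simp only: symdiff_def Diff_empty empty_Diff Un_empty_right) (simp add: prod_eq_iff)
qed

lemma rep_slide:
  assumes fr: "framed_graph V A" and T: "T \<subseteq> V" and ab: "a \<in> V" "b \<in> V" "a \<noteq> b"
  shows "binary_dm (slide (rep V A T) a b)"
proof -
  consider (c1) \<phi> where "\<phi> \<in> snd (rep V A T)" "a \<notin> \<phi>" "b \<notin> \<phi>"
    | (c2) \<phi> where "\<phi> \<in> snd (rep V A T)" "a \<notin> \<phi>" "b \<in> \<phi>"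
    | (c3) "\<forall>\<phi>\<in>snd (rep V A T). a \<in> \<phi>" by blast
  then show ?thesis
  proof cases
    case c1
    obtain A1 where A1: "framed_graph V A1" "rep V A1 \<phi> = rep V A T" using rep_change[OF fr T c1(1)] by blast
    have pV: "\<phi> \<subseteq> V" using rep_sub[OF T c1(1)] .
    have "slide (rep V A T) a b = rep V (congr A1 a b) \<phi>"
      using rep_slide1[OF A1(1) pV c1(2,3) ab] A1(2) by simp
    then show ?thesis using rep_binary[OF congr_framed[OF A1(1) ab(1,2)] pV] by simp
  next
    case c2
    obtain A1 where A1: "framed_graph V A1" "rep V A1 \<phi> = rep V A T" using rep_change[OF fr T c2(1)] by blast
    have pV: "\<phi> \<subseteq> V" using rep_sub[OF T c2(1)] .
    have "slide (rep V A T) a b = rep V (flip A1 a b) \<phi>"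
      using rep_slide2[OF A1(1) pV c2(2,3) ab] A1(2) by simp
    then show ?thesis using rep_binary[OF flip_framed[OF A1(1) ab(1,2)] pV] by simp
  next
    case c3
    then show ?thesis using rep_slide3[OF T c3 ab(1) ab(3)] rep_binary[OF fr T] by simp
  qed
qed

lemma binary_slide:
  assumes "binary_dm D" "a \<in> fst D" "b \<in> fst D" "a \<noteq> b" shows "binary_dm (slide D a b)"
proof -
  obtain A T where "framed_graph (fst D) A" "T \<subseteq> fst D" "D = rep (fst D) A T" using binary_rep[OF assms(1)] by blast
  then show ?thesis using rep_slide[of "fst D" A T a b] assms(2-4) by simp
qed

lemma fst_twist[simp]: "fst (twist D T) = fst D" by (simp add: twist_def)
lemma fst_slide[simp]: "fst (slide D a b) = fst D" by (simp add: slide_def)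

lemma binary_exch:
  assumes "binary_dm D" "a \<in> fst D" "b \<in> fst D" "a \<noteq> b" shows "binary_dm (exch D a b)"
  unfolding exch_def using assms by (intro binary_twist binary_slide) auto


definition dl :: "'a setsys \<Rightarrow> 'a \<Rightarrow> 'a setsys" where
  "dl D e = (fst D - {e}, {\<phi> \<in> snd D. e \<notin> \<phi>})"
definition ct :: "'a setsys \<Rightarrow> 'a \<Rightarrow> 'a setsys" where
  "ct D e = (fst D - {e}, {\<phi> - {e} | \<phi>. \<phi> \<in> snd D \<and> e \<in> \<phi>})"

lemma contr_dl_ct: "contr D e = (if loop D e then dl D e else ct D e)"
  by (simp add: contr_def dl_def ct_def)
lemma del_dl: "del D e = (if coloop D e then contr D e else dl D e)"
  by (simp add: del_def dl_def)

lemma mem_ct: "Z \<in> snd (ct D e) \<longleftrightarrow> e \<notin> Z \<and> insert e Z \<in> snd D"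
proof
  assume "Z \<in> snd (ct D e)"
  then obtain \<phi> where "Z = \<phi> - {e}" "\<phi> \<in> snd D" "e \<in> \<phi>" by (auto simp: ct_def)
  moreover then have "insert e Z = \<phi>" by auto
  ultimately show "e \<notin> Z \<and> insert e Z \<in> snd D" by simp
next
  assume "e \<notin> Z \<and> insert e Z \<in> snd D"
  then have "Z = insert e Z - {e}" "insert e Z \<in> snd D" "e \<in> insert e Z" by auto
  then show "Z \<in> snd (ct D e)" unfolding ct_def snd_conv by blast
qed

lemma mem_symdiff': "Z \<in> symdiff P Q \<longleftrightarrow> ((Z \<in> P) \<noteq> (Z \<in> Q))"
  by (auto simp: symdiff_def)

lemma slide_mem':
  assumes "a \<noteq> b"
  shows "Z \<in> {\<psi> \<union> {a} | \<psi>. \<psi> \<subseteq> V - {a, b} \<and> \<psi> \<union> {b} \<in> \<Phi>} \<longleftrightarrow>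
    (a \<in> Z \<and> b \<notin> Z \<and> Z - {a} \<subseteq> V \<and> insert b (Z - {a}) \<in> \<Phi>)"
proof
  assume "Z \<in> {\<psi> \<union> {a} | \<psi>. \<psi> \<subseteq> V - {a, b} \<and> \<psi> \<union> {b} \<in> \<Phi>}"
  then obtain \<psi> where p: "Z = \<psi> \<union> {a}" "\<psi> \<subseteq> V - {a, b}" "\<psi> \<union> {b} \<in> \<Phi>" by blast
  have "insert b (Z - {a}) = \<psi> \<union> {b}" "Z - {a} = \<psi>" using p by auto
  then show "a \<in> Z \<and> b \<notin> Z \<and> Z - {a} \<subseteq> V \<and> insert b (Z - {a}) \<in> \<Phi>" using p assms by auto
next
  assume Z: "a \<in> Z \<and> b \<notin> Z \<and> Z - {a} \<subseteq> V \<and> insert b (Z - {a}) \<in> \<Phi>"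
  have "Z = (Z - {a}) \<union> {a}" "Z - {a} \<subseteq> V - {a, b}" "(Z - {a}) \<union> {b} \<in> \<Phi>" using Z by auto
  then show "Z \<in> {\<psi> \<union> {a} | \<psi>. \<psi> \<subseteq> V - {a, b} \<and> \<psi> \<union> {b} \<in> \<Phi>}" by blast
qed

lemma mem_slide:
  assumes "a \<noteq> b"
  shows "Z \<in> snd (slide D a b) \<longleftrightarrow>
    ((Z \<in> snd D) \<noteq> (a \<in> Z \<and> b \<notin> Z \<and> Z - {a} \<subseteq> fst D \<and> insert b (Z - {a}) \<in> snd D))"
  unfolding slide_def snd_conv mem_symdiff' slide_mem'[OF assms] ..

lemma slide_invol: "a \<noteq> b \<Longrightarrow> slide (slide D a b) a b = D"
proof -
  assume ab: "a \<noteq> b"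
  have "snd (slide (slide D a b) a b) = snd D"
  proof (rule Set.set_eqI)
    fix Z
    have "insert b (Z - {a}) \<in> snd (slide D a b) \<longleftrightarrow> insert b (Z - {a}) \<in> snd D"
      unfolding mem_slide[OF ab] by auto
    then show "Z \<in> snd (slide (slide D a b) a b) \<longleftrightarrow> Z \<in> snd D"
      unfolding mem_slide[OF ab, of Z "slide D a b"] mem_slide[OF ab, of Z D] by (auto simp: slide_def)
  qed
  then show ?thesis by (simp add: prod_eq_iff slide_def)
qed

lemma loop_slide1:
  assumes ab: "e \<noteq> a" "e \<noteq> b" "a \<noteq> b" and l: "loop D e"
  shows "loop (slide D a b) e"
  unfolding loop_def
proof (intro ballI notI)
  fix Z assume Z: "Z \<in> snd (slide D a b)" and eZ: "e \<in> Z"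
  have l': "\<And>\<phi>. \<phi> \<in> snd D \<Longrightarrow> e \<notin> \<phi>" using l unfolding loop_def by blast
  have 1: "Z \<notin> snd D" using l'[of Z] eZ by blast
  have "e \<in> insert b (Z - {a})" using eZ ab by simp
  then have 2: "insert b (Z - {a}) \<notin> snd D" using l'[of "insert b (Z - {a})"] by blast
  show False using Z 1 2 unfolding mem_slide[OF ab(3)] by simp
qed

lemma loop_slide:
  assumes ab: "e \<noteq> a" "e \<noteq> b" "a \<noteq> b"
  shows "loop (slide D a b) e \<longleftrightarrow> loop D e"
proof
  assume "loop (slide D a b) e"
  then have "loop (slide (slide D a b) a b) e" by (rule loop_slide1[OF ab])
  then show "loop D e" by (simp only: slide_invol[OF ab(3)])
next
  assume "loop D e"
  then show "loop (slide D a b) e" by (rule loop_slide1[OF ab])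
qed

lemma coloop_slide1:
  assumes ab: "e \<noteq> a" "e \<noteq> b" "a \<noteq> b" and l: "coloop D e"
  shows "coloop (slide D a b) e"
  unfolding coloop_def
proof (rule ballI, rule ccontr)
  fix Z assume Z: "Z \<in> snd (slide D a b)" and eZ: "e \<notin> Z"
  have l': "\<And>\<phi>. \<phi> \<in> snd D \<Longrightarrow> e \<in> \<phi>" using l unfolding coloop_def by blast
  have 1: "Z \<notin> snd D" using l'[of Z] eZ by blast
  have "e \<notin> insert b (Z - {a})" using eZ ab by simp
  then have 2: "insert b (Z - {a}) \<notin> snd D" using l'[of "insert b (Z - {a})"] by blast
  show False using Z 1 2 unfolding mem_slide[OF ab(3)] by simp
qed

lemma coloop_slide:
  assumes ab: "e \<noteq> a" "e \<noteq> b" "a \<noteq> b"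
  shows "coloop (slide D a b) e \<longleftrightarrow> coloop D e"
proof
  assume "coloop (slide D a b) e"
  then have "coloop (slide (slide D a b) a b) e" by (rule coloop_slide1[OF ab])
  then show "coloop D e" by (simp only: slide_invol[OF ab(3)])
next
  assume "coloop D e"
  then show "coloop (slide D a b) e" by (rule coloop_slide1[OF ab])
qed

lemma mem_dl: "Z \<in> snd (dl D e) \<longleftrightarrow> Z \<in> snd D \<and> e \<notin> Z"
  by (auto simp: dl_def)

lemma dl_slide:
  assumes ab: "e \<noteq> a" "e \<noteq> b" "a \<noteq> b"
  shows "dl (slide D a b) e = slide (dl D e) a b"
proof -
  have "snd (dl (slide D a b) e) = snd (slide (dl D e) a b)"
  proof (rule Set.set_eqI)
    fix Z
    have fd: "fst (dl D e) = fst D - {e}" by (simp add: dl_def)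
    show "Z \<in> snd (dl (slide D a b) e) \<longleftrightarrow> Z \<in> snd (slide (dl D e) a b)"
    proof (cases "e \<in> Z")
      case True
      have "\<not> (Z - {a} \<subseteq> fst D - {e})" using True ab by blast
      then show ?thesis unfolding mem_dl mem_slide[OF ab(3)] fd using True by simp
    next
      case False
      have "e \<notin> insert b (Z - {a})" using False ab by simp
      moreover have "(Z - {a} \<subseteq> fst D - {e}) \<longleftrightarrow> (Z - {a} \<subseteq> fst D)" using False by blast
      ultimately show ?thesis unfolding mem_dl mem_slide[OF ab(3)] fd using False by simp
    qed
  qed
  then show ?thesis by (simp add: prod_eq_iff slide_def dl_def)
qed

lemma ct_slide:
  assumes ab: "e \<noteq> a" "e \<noteq> b" "a \<noteq> b" and eE: "e \<in> fst D"
  shows "ct (slide D a b) e = slide (ct D e) a b"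
proof -
  have "snd (ct (slide D a b) e) = snd (slide (ct D e) a b)"
  proof (rule Set.set_eqI)
    fix Z
    have fd: "fst (ct D e) = fst D - {e}" by (simp add: ct_def)
    show "Z \<in> snd (ct (slide D a b) e) \<longleftrightarrow> Z \<in> snd (slide (ct D e) a b)"
    proof (cases "e \<in> Z")
      case True
      have "\<not> (Z - {a} \<subseteq> fst D - {e})" using True ab by blast
      then show ?thesis unfolding mem_ct mem_slide[OF ab(3)] fd using True by simp
    next
      case False
      have 1: "e \<notin> insert b (Z - {a})" using False ab by simp
      have 2: "(Z - {a} \<subseteq> fst D - {e}) \<longleftrightarrow> (Z - {a} \<subseteq> fst D)" using False by blast
      have 3: "(insert e Z - {a} \<subseteq> fst D) \<longleftrightarrow> (Z - {a} \<subseteq> fst D)" using eE ab by blast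
      have 4: "insert b (insert e Z - {a}) = insert e (insert b (Z - {a}))" using ab by blast
      have 5: "(a \<in> insert e Z) = (a \<in> Z)" "(b \<in> insert e Z) = (b \<in> Z)" using ab by auto
      show ?thesis unfolding mem_ct mem_slide[OF ab(3)] fd 2 3 4 5 using False 1 by simp
    qed
  qed
  then show ?thesis by (simp add: prod_eq_iff slide_def ct_def)
qed

lemma del_slide: "e \<noteq> a \<Longrightarrow> e \<noteq> b \<Longrightarrow> a \<noteq> b \<Longrightarrow> e \<in> fst D \<Longrightarrow> del (slide D a b) e = slide (del D e) a b"
  unfolding del_dl contr_dl_ct by (simp add: loop_slide coloop_slide dl_slide ct_slide)

lemma contr_slide: "e \<noteq> a \<Longrightarrow> e \<noteq> b \<Longrightarrow> a \<noteq> b \<Longrightarrow> e \<in> fst D \<Longrightarrow> contr (slide D a b) e = slide (contr D e) a b"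
  unfolding contr_dl_ct by (simp add: loop_slide dl_slide ct_slide)

lemma fst_twist'[simp]: "fst (twist D T) = fst D" by (simp add: twist_def)

lemma mem_twist1: "Z \<in> snd (twist D {b}) \<longleftrightarrow> symdiff Z {b} \<in> snd D"
proof -
  have inv2: "\<And>X. symdiff (symdiff X {b}) {b} = X" by (auto simp: symdiff_def)
  show ?thesis unfolding twist_def snd_conv by (metis (no_types, lifting) image_iff inv2)
qed

lemma loop_twist: "e \<noteq> b \<Longrightarrow> loop (twist D {b}) e \<longleftrightarrow> loop D e"
  unfolding loop_def twist_def by (auto simp: symdiff_def)

lemma coloop_twist: "e \<noteq> b \<Longrightarrow> coloop (twist D {b}) e \<longleftrightarrow> coloop D e"
  unfolding coloop_def twist_def by (auto simp: symdiff_def)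

lemma dl_twist: "e \<noteq> b \<Longrightarrow> dl (twist D {b}) e = twist (dl D e) {b}"
  unfolding dl_def twist_def by (auto simp: symdiff_def)

lemma ct_twist:
  assumes "e \<noteq> b"
  shows "ct (twist D {b}) e = twist (ct D e) {b}"
proof -
  have "snd (ct (twist D {b}) e) = snd (twist (ct D e) {b})"
  proof (rule Set.set_eqI)
    fix Z
    have "symdiff (insert e Z) {b} = insert e (symdiff Z {b})" using assms by (auto simp: symdiff_def)
    then show "Z \<in> snd (ct (twist D {b}) e) \<longleftrightarrow> Z \<in> snd (twist (ct D e) {b})"
      unfolding mem_ct mem_twist1 mem_ct using assms by (auto simp: symdiff_def)
  qed
  then show ?thesis by (simp add: prod_eq_iff twist_def ct_def)
qed

lemma del_twist: "e \<noteq> b \<Longrightarrow> del (twist D {b}) e = twist (del D e) {b}"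
  unfolding del_dl contr_dl_ct by (simp add: loop_twist coloop_twist dl_twist ct_twist)

lemma contr_twist: "e \<noteq> b \<Longrightarrow> contr (twist D {b}) e = twist (contr D e) {b}"
  unfolding contr_dl_ct by (simp add: loop_twist dl_twist ct_twist)

lemma loop_exch: "e \<noteq> a \<Longrightarrow> e \<noteq> b \<Longrightarrow> a \<noteq> b \<Longrightarrow> loop (exch D a b) e \<longleftrightarrow> loop D e"
  unfolding exch_def by (simp add: loop_twist loop_slide)
lemma coloop_exch: "e \<noteq> a \<Longrightarrow> e \<noteq> b \<Longrightarrow> a \<noteq> b \<Longrightarrow> coloop (exch D a b) e \<longleftrightarrow> coloop D e"
  unfolding exch_def by (simp add: coloop_twist coloop_slide)
lemma del_exch: "e \<noteq> a \<Longrightarrow> e \<noteq> b \<Longrightarrow> a \<noteq> b \<Longrightarrow> e \<in> fst D \<Longrightarrow> del (exch D a b) e = exch (del D e) a b"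
  unfolding exch_def by (simp add: del_twist del_slide)
lemma contr_exch: "e \<noteq> a \<Longrightarrow> e \<noteq> b \<Longrightarrow> a \<noteq> b \<Longrightarrow> e \<in> fst D \<Longrightarrow> contr (exch D a b) e = exch (contr D e) a b"
  unfolding exch_def by (simp add: contr_twist contr_slide)


definition HH :: "'r::comm_ring \<Rightarrow> 'r \<Rightarrow> 'r \<Rightarrow> 'r \<Rightarrow> bool \<Rightarrow> bool \<Rightarrow> 'r" where
  "HH x y z w p q = (if p \<and> q then x + y else if p then z else w)"

definition GA :: "'r::comm_ring \<Rightarrow> 'r \<Rightarrow> 'r \<Rightarrow> 'r \<Rightarrow> 'r \<Rightarrow> bool \<Rightarrow> bool \<Rightarrow> bool \<Rightarrow> bool \<Rightarrow> 'r" where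
  "GA x y z w c p0 pa pb pab = (if \<not> pa \<and> \<not> pab then z * (HH x y z w p0 pb * c)
     else if \<not> p0 \<and> \<not> pb then w * (HH x y z w pa pab * c)
     else x * (HH x y z w p0 pb * c) + y * (HH x y z w pa pab * c))"

definition GA' :: "'r::comm_ring \<Rightarrow> 'r \<Rightarrow> 'r \<Rightarrow> 'r \<Rightarrow> 'r \<Rightarrow> bool \<Rightarrow> bool \<Rightarrow> bool \<Rightarrow> bool \<Rightarrow> 'r" where
  "GA' x y z w c p0 pa pb pab = (if p0 \<and> \<not> pa \<and> pb \<and> pab then GA x y z w c p0 pb pa pab else GA x y z w c p0 pa pb pab)"

lemma base_alg:
  fixes x y z w c f0 f1 f2 f3 :: "'r::comm_ring"
  assumes "f0 = GA' x y z w c p0 pa pb pab" "f1 = GA' x y z w c p0 pa pb (pab \<noteq> p0)"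
    "f2 = GA' x y z w c p0 (pa \<noteq> pb) pb pab" "f3 = GA' x y z w c p0 (pa \<noteq> pb) pb (pab \<noteq> p0)"
    and ne: "p0 \<or> pa \<or> pb \<or> pab"
  shows "f0 - f1 = f2 - f3"
  using assms unfolding GA'_def GA_def HH_def
  by (cases p0; cases pa; cases pb; cases pab; simp add: algebra_simps)


lemma slide_mems:
  assumes ab: "a \<noteq> b" and fD: "fst D = {a, b}"
  shows "({} \<in> snd (slide D a b)) = ({} \<in> snd D)"
    "({a} \<in> snd (slide D a b)) = (({a} \<in> snd D) \<noteq> ({b} \<in> snd D))"
    "({b} \<in> snd (slide D a b)) = ({b} \<in> snd D)"
    "({a, b} \<in> snd (slide D a b)) = ({a, b} \<in> snd D)"
  unfolding mem_slide[OF ab] fD using ab by auto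

lemma exch_mems:
  assumes ab: "a \<noteq> b" and fD: "fst D = {a, b}"
  shows "({} \<in> snd (exch D a b)) = ({} \<in> snd D)"
    "({a} \<in> snd (exch D a b)) = ({a} \<in> snd D)"
    "({b} \<in> snd (exch D a b)) = ({b} \<in> snd D)"
    "({a, b} \<in> snd (exch D a b)) = (({a, b} \<in> snd D) \<noteq> ({} \<in> snd D))"
proof -
  have ft: "fst (twist D {b}) = {a, b}" using fD by simp
  have e: "\<And>Z. Z \<in> snd (exch D a b) \<longleftrightarrow>
    ((symdiff (symdiff Z {b}) {b} \<in> snd D) \<noteq> (a \<in> symdiff Z {b} \<and> b \<notin> symdiff Z {b} \<and> symdiff Z {b} - {a} \<subseteq> {a, b}
       \<and> symdiff (insert b (symdiff Z {b} - {a})) {b} \<in> snd D))"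
    unfolding exch_def mem_twist1 mem_slide[OF ab] ft ..
  have s1: "symdiff {} {b} = {b}" "symdiff {a} {b} = {a, b}" "symdiff {b} {b} = {}" "symdiff {a, b} {b} = {a}"
    "symdiff {} {b} = {b}" using ab by (auto simp: symdiff_def)
  have s2: "symdiff {a, b} {b} = {a}" "symdiff {b} {b} = {}" "symdiff {} {b} = {b}" using ab by (auto simp: symdiff_def)
  show "({} \<in> snd (exch D a b)) = ({} \<in> snd D)" unfolding e s1 by simp
  show "({a} \<in> snd (exch D a b)) = ({a} \<in> snd D)" unfolding e s1 by simp
  show "({b} \<in> snd (exch D a b)) = ({b} \<in> snd D)" unfolding e s1 using ab by simp
  have "insert b ({a} - {a}) = {b}" by simp
  show "({a, b} \<in> snd (exch D a b)) = (({a, b} \<in> snd D) \<noteq> ({} \<in> snd D))" unfolding e s1 s2 using ab by (simp add: s2)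
qed


lemma bin_props:
  assumes "binary_dm D"
  shows "finite (fst D)" "snd D \<noteq> {}" "\<And>\<phi>. \<phi> \<in> snd D \<Longrightarrow> \<phi> \<subseteq> fst D"
proof -
  obtain A T where fr: "framed_graph (fst D) A" and T: "T \<subseteq> fst D" and eq: "D = rep (fst D) A T"
    using binary_rep[OF assms] by blast
  show "finite (fst D)" using fr by (simp add: framed_graph_def)
  show "snd D \<noteq> {}" using rep_T[of T "fst D" A] eq by auto
  fix \<phi> assume "\<phi> \<in> snd D"
  then show "\<phi> \<subseteq> fst D" using rep_sub[OF T, of \<phi> A] eq by simp
qed

lemma fst_del: "fst (del D e) = fst D - {e}" by (simp add: del_def contr_def)
lemma fst_contr: "fst (contr D e) = fst D - {e}" by (simp add: contr_def)
lemma fst_exch: "fst (exch D a b) = fst D" by (simp add: exch_def)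

theorem proposition4p6:
  fixes f :: "'a setsys \<Rightarrow> 'r::comm_ring" and x y z w :: 'r
  assumes iso: "\<And>D1 D2. binary_dm D1 \<Longrightarrow> binary_dm D2 \<Longrightarrow> ss_iso D1 D2 \<Longrightarrow> f D1 = f D2"
    and rec: "\<And>D e. binary_dm D \<Longrightarrow> e \<in> fst D \<Longrightarrow> \<not> loop D e \<Longrightarrow> \<not> coloop D e \<Longrightarrow>
                f D = x * f (del D e) + y * f (contr D e)"
    and lp: "\<And>D e. binary_dm D \<Longrightarrow> e \<in> fst D \<Longrightarrow> loop D e \<Longrightarrow> f D = z * f (del D e)"
    and clp: "\<And>D e. binary_dm D \<Longrightarrow> e \<in> fst D \<Longrightarrow> coloop D e \<Longrightarrow> f D = w * f (contr D e)"
    and D: "binary_dm D" and ab: "a \<in> fst D" "b \<in> fst D" "a \<noteq> b"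
  shows "f D - f (exch D a b) = f (slide D a b) - f (exch (slide D a b) a b)"
proof -
  define c0 where "c0 = f ({}, {{}})"
  have e0: "\<And>(D::'a setsys) e. fst D = {e} \<Longrightarrow> {} \<in> snd D \<Longrightarrow> (\<forall>\<phi>\<in>snd D. \<phi> \<subseteq> fst D) \<Longrightarrow> dl D e = ({}, {{}})"
  proof -
    fix D :: "'a setsys" and e assume f: "fst D = {e}" "{} \<in> snd D" "\<forall>\<phi>\<in>snd D. \<phi> \<subseteq> fst D"
    have "{\<phi> \<in> snd D. e \<notin> \<phi>} = {{}}" using f by auto
    then show "dl D e = ({}, {{}})" using f by (simp add: dl_def)
  qed
  have e1: "\<And>(D::'a setsys) e. fst D = {e} \<Longrightarrow> {e} \<in> snd D \<Longrightarrow> (\<forall>\<phi>\<in>snd D. \<phi> \<subseteq> fst D) \<Longrightarrow> ct D e = ({}, {{}})"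
  proof -
    fix D :: "'a setsys" and e assume f: "fst D = {e}" "{e} \<in> snd D" "\<forall>\<phi>\<in>snd D. \<phi> \<subseteq> fst D"
    have "snd (ct D e) = {{}}"
    proof (rule Set.set_eqI)
      fix Z show "Z \<in> snd (ct D e) \<longleftrightarrow> Z \<in> {{}}" unfolding mem_ct using f by auto
    qed
    then show "ct D e = ({}, {{}})" using f by (simp add: ct_def)
  qed
  have one: "\<And>D e. binary_dm D \<Longrightarrow> fst D = {e} \<Longrightarrow> f D = HH x y z w ({} \<in> snd D) ({e} \<in> snd D) * c0"
  proof -
    fix D :: "'a setsys" and e assume bD: "binary_dm D" and fD: "fst D = {e}"
    note bp = bin_props[OF bD]
    have sub: "\<forall>\<phi>\<in>snd D. \<phi> \<subseteq> fst D" using bp(3) by blast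
    have eE: "e \<in> fst D" using fD by simp
    have lo: "loop D e \<longleftrightarrow> {e} \<notin> snd D"
      unfolding loop_def using sub fD by (auto dest: subset_singletonD)
    have co: "coloop D e \<longleftrightarrow> {} \<notin> snd D"
      unfolding coloop_def using sub fD by (auto dest: subset_singletonD)
    have ne: "{} \<in> snd D \<or> {e} \<in> snd D" using bp(2) sub fD by (auto dest: subset_singletonD)
    show "f D = HH x y z w ({} \<in> snd D) ({e} \<in> snd D) * c0"
    proof (cases "{} \<in> snd D")
      case p: True
      show ?thesis
      proof (cases "{e} \<in> snd D")
        case q: True
        have "f D = x * f (del D e) + y * f (contr D e)" using rec[OF bD eE] lo co p q by simp
        also have "del D e = ({}, {{}})" using e0[OF fD p sub] co p by (simp add: del_dl)
        also have "contr D e = ({}, {{}})" using e1[OF fD q sub] lo q by (simp add: contr_dl_ct)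
        finally show ?thesis using p q by (simp add: HH_def c0_def distrib_right)
      next
        case q: False
        have "f D = z * f (del D e)" using lp[OF bD eE] lo q by simp
        also have "del D e = ({}, {{}})" using e0[OF fD p sub] co p by (simp add: del_dl)
        finally show ?thesis using p q by (simp add: HH_def c0_def)
      qed
    next
      case p: False
      then have q: "{e} \<in> snd D" using ne by blast
      have "f D = w * f (contr D e)" using clp[OF bD eE] co p by simp
      also have "contr D e = ({}, {{}})" using e1[OF fD q sub] lo q by (simp add: contr_dl_ct)
      finally show ?thesis using p q by (simp add: HH_def c0_def)
    qed
  qed
  have two: "\<And>D u v. binary_dm D \<Longrightarrow> fst D = {u, v} \<Longrightarrow> u \<noteq> v \<Longrightarrow>
     f D = GA x y z w c0 ({} \<in> snd D) ({u} \<in> snd D) ({v} \<in> snd D) ({u, v} \<in> snd D)"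
  proof -
    fix D :: "'a setsys" and u v assume bD: "binary_dm D" and fD: "fst D = {u, v}" and uv: "u \<noteq> v"
    note bp = bin_props[OF bD]
    have sub: "\<And>\<phi>. \<phi> \<in> snd D \<Longrightarrow> \<phi> \<subseteq> {u, v}" using bp(3) fD by blast
    have uE: "u \<in> fst D" using fD by simp
    have fdl: "fst (dl D u) = {v}" using fD uv by (auto simp: dl_def)
    have fct: "fst (ct D u) = {v}" using fD uv by (auto simp: ct_def)
    have m1: "({} \<in> snd (dl D u)) = ({} \<in> snd D)" "({v} \<in> snd (dl D u)) = ({v} \<in> snd D)"
      unfolding mem_dl using uv by auto
    have m2: "({} \<in> snd (ct D u)) = ({u} \<in> snd D)" "({v} \<in> snd (ct D u)) = ({u, v} \<in> snd D)"
      unfolding mem_ct using uv by auto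
    have pw: "\<And>\<phi>. \<phi> \<subseteq> {u, v} \<Longrightarrow> \<phi> = {} \<or> \<phi> = {u} \<or> \<phi> = {v} \<or> \<phi> = {u, v}" by auto
    have lo: "loop D u \<longleftrightarrow> {u} \<notin> snd D \<and> {u, v} \<notin> snd D"
    proof
      assume "loop D u" then show "{u} \<notin> snd D \<and> {u, v} \<notin> snd D" unfolding loop_def by auto
    next
      assume n: "{u} \<notin> snd D \<and> {u, v} \<notin> snd D"
      show "loop D u" unfolding loop_def
      proof
        fix \<phi> assume "\<phi> \<in> snd D"
        then show "u \<notin> \<phi>" using pw[OF sub] n uv by (metis empty_iff insertE)
      qed
    qed
    have co: "coloop D u \<longleftrightarrow> {} \<notin> snd D \<and> {v} \<notin> snd D"
    proof
      assume "coloop D u" then show "{} \<notin> snd D \<and> {v} \<notin> snd D" unfolding coloop_def using uv by auto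
    next
      assume n: "{} \<notin> snd D \<and> {v} \<notin> snd D"
      show "coloop D u" unfolding coloop_def
      proof
        fix \<phi> assume "\<phi> \<in> snd D"
        then show "u \<in> \<phi>" using pw[OF sub] n by (metis insertI1)
      qed
    qed
    have nlc: "\<not> (loop D u \<and> coloop D u)" using bp(2) unfolding loop_def coloop_def by blast
    show "f D = GA x y z w c0 ({} \<in> snd D) ({u} \<in> snd D) ({v} \<in> snd D) ({u, v} \<in> snd D)"
    proof (cases "loop D u")
      case True
      then have nc: "\<not> coloop D u" using nlc by blast
      have dD: "del D u = dl D u" using nc by (simp add: del_dl)
      have b1: "binary_dm (dl D u)" using binary_del[OF bD uE] dD by simp
      have "f D = z * f (dl D u)" using lp[OF bD uE True] dD by simp
      also have "f (dl D u) = HH x y z w ({} \<in> snd D) ({v} \<in> snd D) * c0" using one[OF b1 fdl] m1 by simp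
      finally show ?thesis using True unfolding lo GA_def by (simp add: mult.assoc)
    next
      case False
      note nl = False
      have cD: "contr D u = ct D u" using nl by (simp add: contr_dl_ct)
      have b2: "binary_dm (ct D u)" using binary_contr[OF bD uE] cD by simp
      have fc: "f (ct D u) = HH x y z w ({u} \<in> snd D) ({u, v} \<in> snd D) * c0" using one[OF b2 fct] m2 by simp
      show ?thesis
      proof (cases "coloop D u")
        case True
        have "f D = w * f (ct D u)" using clp[OF bD uE True] cD by simp
        then show ?thesis using True nl fc unfolding lo co GA_def by (auto simp: mult.assoc)
      next
        case False
        have dD: "del D u = dl D u" using False by (simp add: del_dl)
        have b1: "binary_dm (dl D u)" using binary_del[OF bD uE] dD by simp
        have fd: "f (dl D u) = HH x y z w ({} \<in> snd D) ({v} \<in> snd D) * c0" using one[OF b1 fdl] m1 by simp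
        have "f D = x * f (dl D u) + y * f (ct D u)" using rec[OF bD uE nl False] dD cD by simp
        then show ?thesis using False nl fc fd unfolding lo co GA_def by (auto simp: mult.assoc)
      qed
    qed
  qed
  have base: "\<And>D. binary_dm D \<Longrightarrow> fst D = {a, b} \<Longrightarrow>
      f D - f (exch D a b) = f (slide D a b) - f (exch (slide D a b) a b)"
  proof -
    fix D :: "'a setsys" assume bD: "binary_dm D" and fD: "fst D = {a, b}"
    have ba: "{b, a} = {a, b}" by auto
    have G: "\<And>D'. binary_dm D' \<Longrightarrow> fst D' = {a, b} \<Longrightarrow>
       f D' = GA' x y z w c0 ({} \<in> snd D') ({a} \<in> snd D') ({b} \<in> snd D') ({a, b} \<in> snd D')"
    proof -
      fix D' :: "'a setsys" assume b': "binary_dm D'" and f': "fst D' = {a, b}"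
      have 1: "f D' = GA x y z w c0 ({} \<in> snd D') ({a} \<in> snd D') ({b} \<in> snd D') ({a, b} \<in> snd D')"
        by (rule two[OF b' f' ab(3)])
      have 2: "f D' = GA x y z w c0 ({} \<in> snd D') ({b} \<in> snd D') ({a} \<in> snd D') ({a, b} \<in> snd D')"
        using two[OF b', of b a] f' ab(3) ba by simp
      show "f D' = GA' x y z w c0 ({} \<in> snd D') ({a} \<in> snd D') ({b} \<in> snd D') ({a, b} \<in> snd D')"
      proof (cases "{} \<in> snd D' \<and> \<not> {a} \<in> snd D' \<and> {b} \<in> snd D' \<and> {a, b} \<in> snd D'")
        case True
        show ?thesis unfolding GA'_def if_P[OF True] by (rule 2)
      next
        case False
        show ?thesis unfolding GA'_def if_not_P[OF False] by (rule 1)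
      qed
    qed
    have aD: "a \<in> fst D" "b \<in> fst D" using fD by auto
    have bS: "binary_dm (slide D a b)" by (rule binary_slide[OF bD aD ab(3)])
    have bE: "binary_dm (exch D a b)" by (rule binary_exch[OF bD aD ab(3)])
    have fS: "fst (slide D a b) = {a, b}" using fD by simp
    have bES: "binary_dm (exch (slide D a b) a b)" by (rule binary_exch[OF bS]) (use fS ab in auto)
    have fE: "fst (exch D a b) = {a, b}" using fD by (simp add: fst_exch)
    have fES: "fst (exch (slide D a b) a b) = {a, b}" using fS by (simp add: fst_exch)
    note sm = slide_mems[OF ab(3) fD]
    note em = exch_mems[OF ab(3) fD]
    note esm = exch_mems[OF ab(3) fS]
    have ne: "{} \<in> snd D \<or> {a} \<in> snd D \<or> {b} \<in> snd D \<or> {a, b} \<in> snd D"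
    proof -
      obtain \<phi> where "\<phi> \<in> snd D" using bin_props(2)[OF bD] by blast
      moreover have "\<phi> \<subseteq> {a, b}" using bin_props(3)[OF bD calculation] fD by simp
      moreover have "\<And>\<phi>. \<phi> \<subseteq> {a, b} \<Longrightarrow> \<phi> = {} \<or> \<phi> = {a} \<or> \<phi> = {b} \<or> \<phi> = {a, b}" by auto
      ultimately show ?thesis by metis
    qed
    show "f D - f (exch D a b) = f (slide D a b) - f (exch (slide D a b) a b)"
    proof (rule base_alg[OF _ _ _ _ ne])
      show "f D = GA' x y z w c0 ({} \<in> snd D) ({a} \<in> snd D) ({b} \<in> snd D) ({a, b} \<in> snd D)"
        by (rule G[OF bD fD])
      show "f (exch D a b) = GA' x y z w c0 ({} \<in> snd D) ({a} \<in> snd D) ({b} \<in> snd D) (({a, b} \<in> snd D) \<noteq> ({} \<in> snd D))"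
        using G[OF bE fE] em by simp
      show "f (slide D a b) = GA' x y z w c0 ({} \<in> snd D) (({a} \<in> snd D) \<noteq> ({b} \<in> snd D)) ({b} \<in> snd D) ({a, b} \<in> snd D)"
        using G[OF bS fS] sm by simp
      show "f (exch (slide D a b) a b) = GA' x y z w c0 ({} \<in> snd D) (({a} \<in> snd D) \<noteq> ({b} \<in> snd D)) ({b} \<in> snd D) (({a, b} \<in> snd D) \<noteq> ({} \<in> snd D))"
        using G[OF bES fES] esm sm by simp
    qed
  qed
  have main: "\<And>n. \<forall>D. binary_dm D \<longrightarrow> a \<in> fst D \<longrightarrow> b \<in> fst D \<longrightarrow> card (fst D) = n \<longrightarrow>
      f D - f (exch D a b) = f (slide D a b) - f (exch (slide D a b) a b)"
  proof -
    fix n show "\<forall>D. binary_dm D \<longrightarrow> a \<in> fst D \<longrightarrow> b \<in> fst D \<longrightarrow> card (fst D) = n \<longrightarrow>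
      f D - f (exch D a b) = f (slide D a b) - f (exch (slide D a b) a b)"
    proof (induction n rule: less_induct)
      case (less n)
      show ?case
      proof (intro allI impI)
        fix D :: "'a setsys" assume bD: "binary_dm D" and aD: "a \<in> fst D" and bDD: "b \<in> fst D" and cD: "card (fst D) = n"
        show "f D - f (exch D a b) = f (slide D a b) - f (exch (slide D a b) a b)"
        proof (cases "fst D = {a, b}")
          case True
          then show ?thesis by (rule base[OF bD])
        next
          case False
          then obtain e where e: "e \<in> fst D" "e \<noteq> a" "e \<noteq> b" using aD bDD by blast
          note abn = ab(3)
          have fin: "finite (fst D)" using bin_props(1)[OF bD] .
          let ?S = "slide D a b"
          let ?E1 = "exch D a b"
          let ?E2 = "exch ?S a b"
          have bS: "binary_dm ?S" by (rule binary_slide[OF bD aD bDD abn])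
          have bE1: "binary_dm ?E1" by (rule binary_exch[OF bD aD bDD abn])
          have bE2: "binary_dm ?E2" by (rule binary_exch[OF bS]) (use aD bDD abn in simp_all)
          have eS: "e \<in> fst ?S" "e \<in> fst ?E1" "e \<in> fst ?E2" using e by (simp_all add: fst_exch)
          have lS: "loop ?S e \<longleftrightarrow> loop D e" "loop ?E1 e \<longleftrightarrow> loop D e" "loop ?E2 e \<longleftrightarrow> loop D e"
            using e abn by (simp_all add: loop_slide loop_exch)
          have cS: "coloop ?S e \<longleftrightarrow> coloop D e" "coloop ?E1 e \<longleftrightarrow> coloop D e" "coloop ?E2 e \<longleftrightarrow> coloop D e"
            using e abn by (simp_all add: coloop_slide coloop_exch)
          have dS: "del ?S e = slide (del D e) a b" "del ?E1 e = exch (del D e) a b"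
            "del ?E2 e = exch (slide (del D e) a b) a b"
            using e abn by (simp_all add: del_slide del_exch)
          have cC: "contr ?S e = slide (contr D e) a b" "contr ?E1 e = exch (contr D e) a b"
            "contr ?E2 e = exch (slide (contr D e) a b) a b"
            using e abn by (simp_all add: contr_slide contr_exch)
          have lt: "card (fst D - {e}) < n" using card_Diff1_less[OF fin e(1)] cD by simp
          have IHd: "f (del D e) - f (exch (del D e) a b) = f (slide (del D e) a b) - f (exch (slide (del D e) a b) a b)"
            by (rule less.IH[OF lt, rule_format, OF binary_del[OF bD e(1)]]) (use aD bDD e in \<open>auto simp: fst_del\<close>)
          have IHc: "f (contr D e) - f (exch (contr D e) a b) = f (slide (contr D e) a b) - f (exch (slide (contr D e) a b) a b)"
            by (rule less.IH[OF lt, rule_format, OF binary_contr[OF bD e(1)]]) (use aD bDD e in \<open>auto simp: fst_contr\<close>)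
          show ?thesis
          proof (cases "loop D e")
            case True
            have "f D = z * f (del D e)" by (rule lp[OF bD e(1) True])
            moreover have "f ?E1 = z * f (exch (del D e) a b)" using lp[OF bE1 eS(2)] lS True dS by simp
            moreover have "f ?S = z * f (slide (del D e) a b)" using lp[OF bS eS(1)] lS True dS by simp
            moreover have "f ?E2 = z * f (exch (slide (del D e) a b) a b)" using lp[OF bE2 eS(3)] lS True dS by simp
            ultimately show ?thesis using IHd by (simp add: right_diff_distrib[symmetric])
          next
            case nl: False
            show ?thesis
            proof (cases "coloop D e")
              case True
              have "f D = w * f (contr D e)" by (rule clp[OF bD e(1) True])
              moreover have "f ?E1 = w * f (exch (contr D e) a b)" using clp[OF bE1 eS(2)] cS True cC by simp
              moreover have "f ?S = w * f (slide (contr D e) a b)" using clp[OF bS eS(1)] cS True cC by simp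
              moreover have "f ?E2 = w * f (exch (slide (contr D e) a b) a b)" using clp[OF bE2 eS(3)] cS True cC by simp
              ultimately show ?thesis using IHc by (simp add: right_diff_distrib[symmetric])
            next
              case nc: False
              have "f D = x * f (del D e) + y * f (contr D e)" by (rule rec[OF bD e(1) nl nc])
              moreover have "f ?E1 = x * f (exch (del D e) a b) + y * f (exch (contr D e) a b)"
                using rec[OF bE1 eS(2)] lS cS nl nc dS cC by simp
              moreover have "f ?S = x * f (slide (del D e) a b) + y * f (slide (contr D e) a b)"
                using rec[OF bS eS(1)] lS cS nl nc dS cC by simp
              moreover have "f ?E2 = x * f (exch (slide (del D e) a b) a b) + y * f (exch (slide (contr D e) a b) a b)"
                using rec[OF bE2 eS(3)] lS cS nl nc dS cC by simp
              ultimately have "f D - f ?E1 = x * (f (del D e) - f (exch (del D e) a b)) + y * (f (contr D e) - f (exch (contr D e) a b))"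
                "f ?S - f ?E2 = x * (f (slide (del D e) a b) - f (exch (slide (del D e) a b) a b)) + y * (f (slide (contr D e) a b) - f (exch (slide (contr D e) a b) a b))"
                by (simp_all add: algebra_simps)
              then show ?thesis using IHd IHc by simp
            qed
          qed
        qed
      qed
    qed
  qed
  show ?thesis using main D ab by blast
qed


end
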